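(* Let $n,p,\ell$ be positive integers, $A\in\mathbb{R}^{n\times n}$, $C\in\mathbb{R}^{p\times n}$, $X_0,W\in\mathbb{R}^{n\times n}$ symmetric positive definite, and $V=\operatorname{diag}(\sigma_{v,1}^2,\dots,\sigma_{v,p}^2)$ with all $\sigma_{v,i}>0$. Let $\mathcal{I}=\{1,\dots,p\}$ and, for $\mathcal{S}\subseteq\mathcal{I}$, let $L$, $U_{\mathcal{S}}$, $J(\mathcal{S})$ and $f(\mathcal{S})=J(\emptyset)-J(\mathcal{S})$ be as defined in the context. Define $$\underline{\gamma}:=\frac{\lambda_{\min}(L)}{\lambda_{\max}(L+U_{\mathcal{I}})},\qquad \overline{\alpha}:=1-\frac{\{\lambda_{\min}(L)\}^2}{\{\lambda_{\max}(L+U_{\mathcal{I}})\}^2}.$$ Then $f:2^{\mathcal{I}}\to\mathbb{R}$ is nondecreasing (i.e. $f(\mathcal{S}_1)\le f(\mathcal{S}_2)$ whenever $\mathcal{S}_1\subseteq\mathcal{S}_2\subseteq\mathcal{I}$), and its submodularity ratio $\gamma$ and curvature $\alpha$ satisfy $$\gamma\ge\underline{\gamma}>0,\qquad \alpha\le\overline{\alpha}<1.$$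
   Context: Let $\Phi\in\mathbb{R}^{n\ell\times n\ell}$ be the block lower-triangular matrix whose $(i,j)$ block ($i,j=1,\dots,\ell$) is $A^{i-j}$ for $i\ge j$ (with $A^0=I_n$) and $0$ for $i<j$. Let $Z=\operatorname{diag}(X_0,W,\dots,W)$ (block diagonal with $\ell$ blocks) and $L:=Z^{-1}$. For $\mathcal{S}=\{\theta_1<\theta_2<\dots<\theta_s\}\subseteq\mathcal{I}$, the selection matrix $S_{\mathcal{S}}\in\mathbb{R}^{s\times p}$ has $[S_{\mathcal{S}}]_{i,j}=1$ if $j=\theta_i$ and $0$ otherwise; set $G=\{I_\ell\otimes(S_{\mathcal{S}}C)\}\Phi$, $V_{\mathcal{S}}=I_\ell\otimes(S_{\mathcal{S}}VS_{\mathcal{S}}^\top)$ and $U_{\mathcal{S}}:=G^\top V_{\mathcal{S}}^{-1}G$, with the convention $U_\emptyset=0$. (Equivalently $U_{\mathcal{S}}=\sum_{i\in\mathcal{S}}\sigma_{v,i}^{-2}\Phi^\top(I_\ell\otimes C)^\top(I_\ell\otimes I^{(i)})(I_\ell\otimes C)\Phi$, where $I^{(i)}$ is the $p\times p$ matrix with a single $1$ in position $(i,i)$.) Define $J(\mathcal{S}):=\operatorname{tr}[(L+U_{\mathcal{S}})^{-1}]$ (this is the smoothing mean square error over times $0,\dots,\ell-1$ for the system $x_{k+1}=Ax_k+w_k$, $y_k=Cx_k+v_k$ using only outputs indexed by $\mathcal{S}$, with $\mathrm{Cov}[x_0]=X_0$, $\mathrm{Cov}[w_k]=W$, $\mathrm{Cov}[v_k]=V$),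 and $f(\mathcal{S}):=-J(\mathcal{S})+J(\emptyset)$. $\lambda_{\min},\lambda_{\max}$ denote minimum and maximum eigenvalues. For $\Omega,\mathcal{S}\subseteq\mathcal{I}$ let $\rho_\Omega(\mathcal{S}):=f(\mathcal{S}\cup\Omega)-f(\mathcal{S})$. The submodularity ratio of $f$ is the largest scalar $\gamma$ such that $\sum_{\omega\in\Omega\setminus\mathcal{S}}\rho_{\{\omega\}}(\mathcal{S})\ge\gamma\,\rho_\Omega(\mathcal{S})$ for all $\Omega,\mathcal{S}\subseteq\mathcal{I}$. The curvature of $f$ is the smallest scalar $\alpha$ such that $\rho_{\{j\}}(\mathcal{S}\setminus\{j\}\cup\Omega)\ge(1-\alpha)\rho_{\{j\}}(\mathcal{S}\setminus\{j\})$ for all $\Omega,\mathcal{S}\subseteq\mathcal{I}$ and all $j\in\mathcal{S}\setminus\Omega$. *)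

theory Defs
  imports "Jordan_Normal_Form.Matrix" "Jordan_Normal_Form.Char_Poly" "HOL-Library.Extended_Real"
begin

definition mat_trace :: "real mat \<Rightarrow> real" where
  "mat_trace M = (\<Sum>i<dim_row M. M $$ (i, i))"

definition mat_inv :: "real mat \<Rightarrow> real mat" where
  "mat_inv M = (SOME B. B \<in> carrier_mat (dim_row M) (dim_row M) \<and>
      M * B = 1\<^sub>m (dim_row M) \<and> B * M = 1\<^sub>m (dim_row M))"

definition sym_posdef :: "real mat \<Rightarrow> nat \<Rightarrow> bool" where
  "sym_posdef M k \<longleftrightarrow> M \<in> carrier_mat k k \<and> transpose_mat M = M \<and>
      (\<forall>v \<in> carrier_vec k. v \<noteq> 0\<^sub>v k \<longrightarrow> v \<bullet> (M *\<^sub>v v) > 0)"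

definition lambda_min :: "real mat \<Rightarrow> real" where
  "lambda_min M = Min {k. eigenvalue M k}"

definition lambda_max :: "real mat \<Rightarrow> real" where
  "lambda_max M = Max {k. eigenvalue M k}"

(* I_l \<otimes> M : block diagonal with l copies of M *)
definition blockdiag :: "nat \<Rightarrow> real mat \<Rightarrow> real mat" where
  "blockdiag l M = mat (l * dim_row M) (l * dim_col M)
     (\<lambda>(r, c). if r div dim_row M = c div dim_col M
               then M $$ (r mod dim_row M, c mod dim_col M) else 0)"

(* Phi: block lower triangular, (i,j) block = A^(i-j) for i \<ge> j *)
definition Phi :: "nat \<Rightarrow> nat \<Rightarrow> real mat \<Rightarrow> real mat" where
  "Phi n l A = mat (n * l) (n * l)
     (\<lambda>(r, c). if c div n \<le> r div n
               then (A ^\<^sub>m (r div n - c div n)) $$ (r mod n, c mod n) else 0)"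

(* Z = diag(X0, W, ..., W) with l blocks *)
definition Zmat :: "nat \<Rightarrow> nat \<Rightarrow> real mat \<Rightarrow> real mat \<Rightarrow> real mat" where
  "Zmat n l X0 W = mat (n * l) (n * l)
     (\<lambda>(r, c). if r div n = c div n
               then (if r div n = 0 then X0 else W) $$ (r mod n, c mod n) else 0)"

definition Lmat :: "nat \<Rightarrow> nat \<Rightarrow> real mat \<Rightarrow> real mat \<Rightarrow> real mat" where
  "Lmat n l X0 W = mat_inv (Zmat n l X0 W)"

(* selection matrix S_S (indices 0-based: row i selects the i-th smallest element of S) *)
definition sel_mat :: "nat \<Rightarrow> nat set \<Rightarrow> real mat" where
  "sel_mat p S = mat (card S) p (\<lambda>(i, j). if j = sorted_list_of_set S ! i then 1 else 0)"

definition Vmat :: "nat \<Rightarrow> (nat \<Rightarrow> real) \<Rightarrow> real mat" where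
  "Vmat p \<sigma> = mat p p (\<lambda>(i, j). if i = j then (\<sigma> i)\<^sup>2 else 0)"

definition Umat :: "nat \<Rightarrow> nat \<Rightarrow> nat \<Rightarrow> real mat \<Rightarrow> real mat \<Rightarrow> (nat \<Rightarrow> real)
                    \<Rightarrow> nat set \<Rightarrow> real mat" where
  "Umat n p l A C \<sigma> S =
     (if S = {} then 0\<^sub>m (n * l) (n * l)
      else let G = blockdiag l (sel_mat p S * C) * Phi n l A;
               VS = blockdiag l (sel_mat p S * Vmat p \<sigma> * transpose_mat (sel_mat p S))
           in transpose_mat G * mat_inv VS * G)"

definition Jfun :: "nat \<Rightarrow> nat \<Rightarrow> nat \<Rightarrow> real mat \<Rightarrow> real mat \<Rightarrow> real mat \<Rightarrow> real mat
                    \<Rightarrow> (nat \<Rightarrow> real) \<Rightarrow> nat set \<Rightarrow> real" where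
  "Jfun n p l A C X0 W \<sigma> S = mat_trace (mat_inv (Lmat n l X0 W + Umat n p l A C \<sigma> S))"

definition ffun :: "nat \<Rightarrow> nat \<Rightarrow> nat \<Rightarrow> real mat \<Rightarrow> real mat \<Rightarrow> real mat \<Rightarrow> real mat
                    \<Rightarrow> (nat \<Rightarrow> real) \<Rightarrow> nat set \<Rightarrow> real" where
  "ffun n p l A C X0 W \<sigma> S = Jfun n p l A C X0 W \<sigma> {} - Jfun n p l A C X0 W \<sigma> S"

definition rho :: "(nat set \<Rightarrow> real) \<Rightarrow> nat set \<Rightarrow> nat set \<Rightarrow> real" where
  "rho f \<Omega> S = f (S \<union> \<Omega>) - f S"

(* largest gamma (in the extended reals, +\<infinity> if unbounded) *)
definition submod_ratio :: "(nat set \<Rightarrow> real) \<Rightarrow> nat set \<Rightarrow> ereal" where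
  "submod_ratio f I = Sup (ereal ` {\<gamma>. \<forall>\<Omega> S. \<Omega> \<subseteq> I \<longrightarrow> S \<subseteq> I \<longrightarrow>
        (\<Sum>\<omega>\<in>\<Omega> - S. rho f {\<omega>} S) \<ge> \<gamma> * rho f \<Omega> S})"

(* smallest alpha (in the extended reals, -\<infinity> if unbounded) *)
definition curvature :: "(nat set \<Rightarrow> real) \<Rightarrow> nat set \<Rightarrow> ereal" where
  "curvature f I = Inf (ereal ` {\<alpha>. \<forall>\<Omega> S j. \<Omega> \<subseteq> I \<longrightarrow> S \<subseteq> I \<longrightarrow> j \<in> S - \<Omega> \<longrightarrow>
        rho f {j} ((S - {j}) \<union> \<Omega>) \<ge> (1 - \<alpha>) * rho f {j} (S - {j})})"

end

theory Submission
  imports Defs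
begin

lemma disc_le:
  fixes a b c :: real
  assumes a: "a \<ge> 0" and h: "\<And>t. c + 2 * b * t + a * t\<^sup>2 \<ge> 0"
  shows "b\<^sup>2 \<le> a * c"
proof (cases "a = 0")
  case True
  have "b = 0"
  proof (rule ccontr)
    assume b: "b \<noteq> 0"
    have "c + 2 * b * (- (c + 1) / (2 * b)) + a * (- (c + 1) / (2 * b))\<^sup>2 \<ge> 0" by (rule h)
    with True b show False by (simp add: field_simps)
  qed
  then show ?thesis using True by simp
next
  case False
  with a have ap: "a > 0" by simp
  have "c + 2 * b * (- b / a) + a * (- b / a)\<^sup>2 \<ge> 0" by (rule h)
  then have "c - b\<^sup>2 / a \<ge> 0" using ap by (simp add: field_simps power2_eq_square)
  then show ?thesis using ap by (simp add: field_simps)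
qed

lemma sym_transfer:
  fixes M :: "real mat"
  assumes M: "M \<in> carrier_mat N N" and s: "transpose_mat M = M"
    and x: "x \<in> carrier_vec N" and y: "y \<in> carrier_vec N"
  shows "x \<bullet> (M *\<^sub>v y) = (M *\<^sub>v x) \<bullet> y"
  using transpose_vec_mult_scalar[OF M y x] s by simp

lemma qf_expand:
  fixes R :: "real mat"
  assumes R: "R \<in> carrier_mat N N" and s: "transpose_mat R = R"
    and x: "x \<in> carrier_vec N" and y: "y \<in> carrier_vec N"
  shows "(x + t \<cdot>\<^sub>v y) \<bullet> (R *\<^sub>v (x + t \<cdot>\<^sub>v y))
       = x \<bullet> (R *\<^sub>v x) + 2 * t * (x \<bullet> (R *\<^sub>v y)) + t\<^sup>2 * (y \<bullet> (R *\<^sub>v y))"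
proof -
  have ty: "t \<cdot>\<^sub>v y \<in> carrier_vec N" using y by simp
  have Rx: "R *\<^sub>v x \<in> carrier_vec N" using R x by simp
  have Ry: "R *\<^sub>v y \<in> carrier_vec N" using R y by simp
  have e1: "R *\<^sub>v (x + t \<cdot>\<^sub>v y) = R *\<^sub>v x + t \<cdot>\<^sub>v (R *\<^sub>v y)"
    using R x y by (simp add: mult_add_distrib_mat_vec mult_mat_vec)
  have "(x + t \<cdot>\<^sub>v y) \<bullet> (R *\<^sub>v x + t \<cdot>\<^sub>v (R *\<^sub>v y))
      = x \<bullet> (R *\<^sub>v x) + t * (x \<bullet> (R *\<^sub>v y)) + t * (y \<bullet> (R *\<^sub>v x)) + t * t * (y \<bullet> (R *\<^sub>v y))"
    using x y Rx Ry ty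
    by (simp add: add_scalar_prod_distrib scalar_prod_add_distrib algebra_simps)
  moreover have "y \<bullet> (R *\<^sub>v x) = x \<bullet> (R *\<^sub>v y)"
    using sym_transfer[OF R s y x] comm_scalar_prod[OF Ry x] by simp
  ultimately show ?thesis using e1 by (simp add: power2_eq_square algebra_simps)
qed

lemma cs_psd:
  fixes R :: "real mat"
  assumes R: "R \<in> carrier_mat N N" and s: "transpose_mat R = R"
    and psd: "\<And>z. z \<in> carrier_vec N \<Longrightarrow> z \<bullet> (R *\<^sub>v z) \<ge> 0"
    and x: "x \<in> carrier_vec N" and y: "y \<in> carrier_vec N"
  shows "(x \<bullet> (R *\<^sub>v y))\<^sup>2 \<le> (x \<bullet> (R *\<^sub>v x)) * (y \<bullet> (R *\<^sub>v y))"
proof -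
  have "(x \<bullet> (R *\<^sub>v y))\<^sup>2 \<le> (y \<bullet> (R *\<^sub>v y)) * (x \<bullet> (R *\<^sub>v x))"
  proof (rule disc_le)
    show "0 \<le> y \<bullet> (R *\<^sub>v y)" using psd y by simp
    fix t :: real
    have "(x + t \<cdot>\<^sub>v y) \<bullet> (R *\<^sub>v (x + t \<cdot>\<^sub>v y)) \<ge> 0" using psd x y by simp
    then show "x \<bullet> (R *\<^sub>v x) + 2 * (x \<bullet> (R *\<^sub>v y)) * t + y \<bullet> (R *\<^sub>v y) * t\<^sup>2 \<ge> 0"
      using qf_expand[OF R s x y, of t] by (simp add: algebra_simps)
  qed
  then show ?thesis by (simp add: algebra_simps)
qed

lemma mat_vec_zero: "M \<in> carrier_mat N N \<Longrightarrow> M *\<^sub>v 0\<^sub>v N = (0\<^sub>v N :: real vec)"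
  by (rule eq_vecI) auto

definition psd :: "real mat \<Rightarrow> nat \<Rightarrow> bool" where
  "psd M N \<longleftrightarrow> M \<in> carrier_mat N N \<and> transpose_mat M = M \<and>
      (\<forall>v \<in> carrier_vec N. v \<bullet> (M *\<^sub>v v) \<ge> 0)"

lemma pd_inv:
  assumes pd: "sym_posdef M N"
  shows "mat_inv M \<in> carrier_mat N N" "M * mat_inv M = 1\<^sub>m N" "mat_inv M * M = 1\<^sub>m N"
proof -
  have M: "M \<in> carrier_mat N N" using pd unfolding sym_posdef_def by auto
  have "det M \<noteq> 0"
  proof
    assume "det M = 0"
    then obtain v where v: "v \<in> carrier_vec N" "v \<noteq> 0\<^sub>v N" "M *\<^sub>v v = 0\<^sub>v N"
      using det_0_iff_vec_prod_zero[OF M] by auto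
    then have "v \<bullet> (M *\<^sub>v v) > 0" using pd unfolding sym_posdef_def by auto
    then show False using v by simp
  qed
  from det_non_zero_imp_unit[OF M this, of "()"]
  have ex: "\<exists>B. B \<in> carrier_mat N N \<and> M * B = 1\<^sub>m N \<and> B * M = 1\<^sub>m N"
    unfolding Units_def ring_mat_def by auto
  have d: "dim_row M = N" using M by simp
  from ex have "mat_inv M \<in> carrier_mat N N \<and> M * mat_inv M = 1\<^sub>m N \<and> mat_inv M * M = 1\<^sub>m N"
    unfolding mat_inv_def d by (rule someI_ex)
  then show "mat_inv M \<in> carrier_mat N N" "M * mat_inv M = 1\<^sub>m N" "mat_inv M * M = 1\<^sub>m N"
    by auto
qed

lemma inv_unique:
  fixes M B C :: "real mat"
  assumes M: "M \<in> carrier_mat N N" and B: "B \<in> carrier_mat N N" and C: "C \<in> carrier_mat N N"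
    and h1: "B * M = 1\<^sub>m N" and h2: "M * C = 1\<^sub>m N"
  shows "B = C"
proof -
  have "B = B * (M * C)" using h2 B by simp
  also have "\<dots> = (B * M) * C" using B M C by simp
  also have "\<dots> = C" using h1 C by simp
  finally show ?thesis .
qed

lemma pd_inv_sym:
  assumes pd: "sym_posdef M N"
  shows "transpose_mat (mat_inv M) = mat_inv M"
proof -
  have M: "M \<in> carrier_mat N N" and s: "transpose_mat M = M" using pd unfolding sym_posdef_def by auto
  note I = pd_inv[OF pd]
  have "transpose_mat (mat_inv M) * M = 1\<^sub>m N"
    using arg_cong[OF I(2), of transpose_mat] transpose_mult[OF M I(1)] s by simp
  then show ?thesis using inv_unique[OF M _ I(1), of "transpose_mat (mat_inv M)"] I by simp
qed

lemma pd_inv_vec: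
  assumes pd: "sym_posdef M N" and x: "x \<in> carrier_vec N"
  shows "mat_inv M *\<^sub>v (M *\<^sub>v x) = x" "M *\<^sub>v (mat_inv M *\<^sub>v x) = x"
proof -
  have M: "M \<in> carrier_mat N N" using pd unfolding sym_posdef_def by auto
  note I = pd_inv[OF pd]
  have "(mat_inv M * M) *\<^sub>v x = mat_inv M *\<^sub>v (M *\<^sub>v x)" using M I x by (intro assoc_mult_mat_vec)
  then have "mat_inv M *\<^sub>v (M *\<^sub>v x) = (mat_inv M * M) *\<^sub>v x" by simp
  then show "mat_inv M *\<^sub>v (M *\<^sub>v x) = x" using I x by simp
  have "(M * mat_inv M) *\<^sub>v x = M *\<^sub>v (mat_inv M *\<^sub>v x)" using M I x by (intro assoc_mult_mat_vec)
  then have "M *\<^sub>v (mat_inv M *\<^sub>v x) = (M * mat_inv M) *\<^sub>v x" by simp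
  then show "M *\<^sub>v (mat_inv M *\<^sub>v x) = x" using I x by simp
qed

lemma pd_inv_pd:
  assumes pd: "sym_posdef M N"
  shows "sym_posdef (mat_inv M) N"
proof -
  have M: "M \<in> carrier_mat N N" and s: "transpose_mat M = M" using pd unfolding sym_posdef_def by auto
  note I = pd_inv[OF pd]
  have "v \<bullet> (mat_inv M *\<^sub>v v) > 0" if v: "v \<in> carrier_vec N" "v \<noteq> 0\<^sub>v N" for v
  proof -
    let ?w = "mat_inv M *\<^sub>v v"
    have w: "?w \<in> carrier_vec N" using I v by simp
    have vw: "v = M *\<^sub>v ?w" using pd_inv_vec[OF pd v(1)] by simp
    have "?w \<noteq> 0\<^sub>v N"
    proof
      assume "?w = 0\<^sub>v N"
      then have "v = 0\<^sub>v N" using vw M mat_vec_zero by simp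
      then show False using v by simp
    qed
    then have "?w \<bullet> (M *\<^sub>v ?w) > 0" using pd w unfolding sym_posdef_def by auto
    moreover have "v \<bullet> ?w = ?w \<bullet> (M *\<^sub>v ?w)"
      using vw comm_scalar_prod[OF v(1) w] by simp
    ultimately show ?thesis by simp
  qed
  then show ?thesis unfolding sym_posdef_def using I(1) pd_inv_sym[OF pd] by auto
qed

lemma qf_add:
  fixes A B :: "real mat"
  assumes "A \<in> carrier_mat N N" "B \<in> carrier_mat N N" "v \<in> carrier_vec N"
  shows "v \<bullet> ((A + B) *\<^sub>v v) = v \<bullet> (A *\<^sub>v v) + v \<bullet> (B *\<^sub>v v)"
  using assms by (simp add: add_mult_distrib_mat_vec scalar_prod_add_distrib[of v N])

lemma psd_add: assumes "psd A N" "psd B N" shows "psd (A + B) N"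
proof -
  have A: "A \<in> carrier_mat N N" and B: "B \<in> carrier_mat N N" using assms unfolding psd_def by auto
  show ?thesis using assms A B unfolding psd_def by (auto simp: qf_add transpose_add)
qed

lemma pd_add_psd: assumes "sym_posdef A N" "psd B N" shows "sym_posdef (A + B) N"
proof -
  have A: "A \<in> carrier_mat N N" and B: "B \<in> carrier_mat N N" using assms unfolding psd_def sym_posdef_def by auto
  show ?thesis using assms A B unfolding psd_def sym_posdef_def
    by (auto simp: qf_add transpose_add intro: add_pos_nonneg)
qed

lemma pd_psd: assumes "sym_posdef A N" shows "psd A N"
proof -
  have A: "A \<in> carrier_mat N N" using assms unfolding sym_posdef_def by auto
  have "v \<bullet> (A *\<^sub>v v) \<ge> 0" if v: "v \<in> carrier_vec N" for v
  proof (cases "v = 0\<^sub>v N")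
    case True then show ?thesis using A by simp
  next
    case False then show ?thesis using assms v unfolding sym_posdef_def by (auto intro: less_imp_le)
  qed
  then show ?thesis using assms unfolding psd_def sym_posdef_def by auto
qed

lemma sp_sum: "y \<in> carrier_vec N \<Longrightarrow> x \<bullet> y = (\<Sum>i<N. x $ i * y $ i)"
  unfolding scalar_prod_def by (simp add: lessThan_atLeast0)

lemma qf_sum:
  fixes A :: "real mat"
  assumes A: "A \<in> carrier_mat N N" and x: "x \<in> carrier_vec N"
  shows "x \<bullet> (A *\<^sub>v x) = (\<Sum>i<N. \<Sum>j<N. x $ i * A $$ (i, j) * x $ j)"
proof -
  have "x \<bullet> (A *\<^sub>v x) = (\<Sum>i<N. x $ i * (A *\<^sub>v x) $ i)" using A x by (intro sp_sum) simp
  also have "\<dots> = (\<Sum>i<N. x $ i * (\<Sum>j<N. A $$ (i, j) * x $ j))"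
    using A x by (intro sum.cong refl) (simp add: sp_sum)
  also have "\<dots> = (\<Sum>i<N. \<Sum>j<N. x $ i * A $$ (i, j) * x $ j)"
    by (simp add: sum_distrib_left mult.assoc)
  finally show ?thesis .
qed

lemma comp_le: fixes x :: "real vec"
  assumes x: "x \<in> carrier_vec N" and i: "i < N" shows "(x $ i)\<^sup>2 \<le> x \<bullet> x"
proof -
  have "x \<bullet> x = (\<Sum>j<N. (x $ j)\<^sup>2)" using x by (simp add: sp_sum power2_eq_square)
  moreover have "(x $ i)\<^sup>2 \<le> (\<Sum>j<N. (x $ j)\<^sup>2)"
    using i by (intro member_le_sum) auto
  ultimately show ?thesis by simp
qed

lemma qf_abs_bound:
  fixes A :: "real mat"
  assumes A: "A \<in> carrier_mat N N" and x: "x \<in> carrier_vec N"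
  shows "\<bar>x \<bullet> (A *\<^sub>v x)\<bar> \<le> (\<Sum>i<N. \<Sum>j<N. \<bar>A $$ (i, j)\<bar>) * (x \<bullet> x)"
proof -
  have "\<bar>x \<bullet> (A *\<^sub>v x)\<bar> \<le> (\<Sum>i<N. \<bar>\<Sum>j<N. x $ i * A $$ (i, j) * x $ j\<bar>)"
    unfolding qf_sum[OF A x] by (rule sum_abs)
  also have "\<dots> \<le> (\<Sum>i<N. \<Sum>j<N. \<bar>x $ i * A $$ (i, j) * x $ j\<bar>)"
    by (intro sum_mono sum_abs)
  also have "\<dots> \<le> (\<Sum>i<N. \<Sum>j<N. \<bar>A $$ (i, j)\<bar> * (x \<bullet> x))"
  proof (intro sum_mono)
    fix i j assume i: "i \<in> {..<N}" and j: "j \<in> {..<N}"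
    have "(x $ i)\<^sup>2 \<le> x \<bullet> x" "(x $ j)\<^sup>2 \<le> x \<bullet> x" using comp_le[OF x] i j by auto
    moreover have "2 * \<bar>x $ i * x $ j\<bar> \<le> (x $ i)\<^sup>2 + (x $ j)\<^sup>2"
      using sum_squares_bound[of "\<bar>x $ i\<bar>" "\<bar>x $ j\<bar>"]
      by (simp add: abs_mult power2_eq_square)
    ultimately have "\<bar>x $ i * x $ j\<bar> \<le> x \<bullet> x" by simp
    then have "\<bar>A $$ (i, j)\<bar> * \<bar>x $ i * x $ j\<bar> \<le> \<bar>A $$ (i, j)\<bar> * (x \<bullet> x)"
      by (intro mult_left_mono) auto
    then show "\<bar>x $ i * A $$ (i, j) * x $ j\<bar> \<le> \<bar>A $$ (i, j)\<bar> * (x \<bullet> x)"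
      by (simp add: abs_mult algebra_simps)
  qed
  also have "\<dots> = (\<Sum>i<N. \<Sum>j<N. \<bar>A $$ (i, j)\<bar>) * (x \<bullet> x)"
    by (simp add: sum_distrib_right)
  finally show ?thesis .
qed

lemma charmat_vec:
  fixes M :: "real mat"
  assumes M: "M \<in> carrier_mat N N" and x: "x \<in> carrier_vec N"
  shows "char_matrix M c *\<^sub>v x = M *\<^sub>v x + (- c) \<cdot>\<^sub>v x"
proof -
  have "(\<Sum>j<N. (M $$ (i, j) - c * (if j = i then 1 else 0)) * x $ j) =
        (\<Sum>j<N. M $$ (i, j) * x $ j) - c * x $ i" if i: "i < N" for i
  proof -
    have "(\<Sum>j<N. (M $$ (i, j) - c * (if j = i then 1 else 0)) * x $ j) =
        (\<Sum>j<N. M $$ (i, j) * x $ j - (if j = i then c * x $ j else 0))"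
      by (intro sum.cong) (auto simp: algebra_simps)
    also have "\<dots> = (\<Sum>j<N. M $$ (i, j) * x $ j) - (\<Sum>j<N. (if j = i then c * x $ j else 0))"
      by (rule sum_subtractf)
    also have "(\<Sum>j<N. (if j = i then c * x $ j else 0)) = c * x $ i" using i by simp
    finally show ?thesis .
  qed
  then show ?thesis using M x unfolding char_matrix_def
    by (intro eq_vecI) (auto simp: add_scalar_prod_distrib[of _ N] sp_sum)
qed

lemma sp_self_pos:
  fixes x :: "real vec"
  assumes x: "x \<in> carrier_vec N" and nz: "x \<noteq> 0\<^sub>v N"
  shows "x \<bullet> x > 0"
proof -
  have ge: "x \<bullet> x \<ge> 0" using x by (simp add: sp_sum[of _ N] sum_nonneg)
  have "x \<bullet> x \<noteq> 0"
  proof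
    assume z: "x \<bullet> x = 0"
    have "x = 0\<^sub>v N"
    proof (rule eq_vecI)
      fix i assume "i < dim_vec (0\<^sub>v N)"
      then have i: "i < N" by simp
      have "(x $ i)\<^sup>2 \<le> 0" using comp_le[OF x i] z by simp
      then show "x $ i = 0\<^sub>v N $ i" using i by simp
    qed (use x in simp)
    with nz show False by simp
  qed
  with ge show ?thesis by simp
qed

lemma sp_self_ge: "(x :: real vec) \<in> carrier_vec N \<Longrightarrow> x \<bullet> x \<ge> 0"
  by (simp add: sp_sum[of _ N] sum_nonneg)

lemma charmat_carrier: "M \<in> carrier_mat N N \<Longrightarrow> char_matrix M c \<in> carrier_mat N N"
  unfolding char_matrix_def by auto

lemma charmat_sym:
  fixes M :: "real mat"
  assumes M: "M \<in> carrier_mat N N" and s: "transpose_mat M = M"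
  shows "transpose_mat (char_matrix M c) = char_matrix M c"
proof -
  have e: "M $$ (j, i) = M $$ (i, j)" if "i < N" "j < N" for i j
    using arg_cong[OF s, of "\<lambda>A. A $$ (i, j)"] that M by simp
  show ?thesis using M e unfolding char_matrix_def by (intro eq_matI) auto
qed

lemma finite_eigs:
  fixes M :: "real mat"
  assumes M: "M \<in> carrier_mat N N"
  shows "finite {k. eigenvalue M k}"
proof -
  have "char_poly M \<noteq> 0" using degree_monic_char_poly[OF M] by auto
  then show ?thesis using eigenvalue_root_char_poly[OF M] poly_roots_finite by simp
qed

lemma sym_min_eig:
  fixes M :: "real mat"
  assumes M: "M \<in> carrier_mat N N" and s: "transpose_mat M = M" and N: "0 < N"
  shows "\<exists>\<mu>. eigenvalue M \<mu> \<and> (\<forall>x\<in>carrier_vec N. \<mu> * (x \<bullet> x) \<le> x \<bullet> (M *\<^sub>v x))"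
proof -
  define Q where "Q = (\<lambda>x. x \<bullet> (M *\<^sub>v x)) ` {x \<in> carrier_vec N. x \<bullet> x = 1}"
  define K where "K = (\<Sum>i<N. \<Sum>j<N. \<bar>M $$ (i, j)\<bar>)"
  have "(\<Sum>i<N. (unit_vec N 0 :: real vec) $ i * unit_vec N 0 $ i) = (\<Sum>i<N. if i = 0 then 1 else 0)"
    using N by (intro sum.cong) auto
  then have u: "(unit_vec N 0 :: real vec) \<bullet> unit_vec N 0 = 1" using N by (simp add: sp_sum[of _ N])
  then have "unit_vec N 0 \<in> {x \<in> carrier_vec N. x \<bullet> x = (1::real)}" by simp
  then have Qne: "Q \<noteq> {}" unfolding Q_def image_is_empty by blast
  have bdd: "bdd_below Q"
  proof
    fix q assume "q \<in> Q"
    then obtain x where x: "x \<in> carrier_vec N" "x \<bullet> x = 1" "q = x \<bullet> (M *\<^sub>v x)" unfolding Q_def by (elim imageE) auto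
    show "- K \<le> q" using qf_abs_bound[OF M x(1)] x unfolding K_def by simp
  qed
  define \<mu> where "\<mu> = Inf Q"
  have lowQ: "\<mu> \<le> q" if "q \<in> Q" for q unfolding \<mu>_def using that bdd by (rule cInf_lower)
  have low: "\<mu> * (x \<bullet> x) \<le> x \<bullet> (M *\<^sub>v x)" if x: "x \<in> carrier_vec N" for x
  proof (cases "x = 0\<^sub>v N")
    case True then show ?thesis using M by (simp add: mat_vec_zero)
  next
    case False
    have xx: "x \<bullet> x > 0" using sp_self_pos[OF x False] .
    define r where "r = 1 / sqrt (x \<bullet> x)"
    have r2: "r * r = 1 / (x \<bullet> x)" unfolding r_def using xx
      by (simp add: real_sqrt_mult[symmetric])
    let ?y = "r \<cdot>\<^sub>v x"
    have y: "?y \<in> carrier_vec N" using x by simp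
    have yy: "?y \<bullet> ?y = 1" using x xx r2 by (simp add: mult.assoc[symmetric])
    have "?y \<bullet> (M *\<^sub>v ?y) = r * r * (x \<bullet> (M *\<^sub>v x))" using x M by (simp add: mult_mat_vec)
    then have "?y \<bullet> (M *\<^sub>v ?y) = (x \<bullet> (M *\<^sub>v x)) / (x \<bullet> x)" using r2 by simp
    moreover have "?y \<bullet> (M *\<^sub>v ?y) \<in> Q" unfolding Q_def using y yy by (intro imageI) simp
    ultimately have "\<mu> \<le> (x \<bullet> (M *\<^sub>v x)) / (x \<bullet> x)" using lowQ by simp
    then show ?thesis using xx by (simp add: field_simps)
  qed
  let ?R = "char_matrix M \<mu>"
  have R: "?R \<in> carrier_mat N N" using charmat_carrier[OF M] .
  have Rs: "transpose_mat ?R = ?R" using charmat_sym[OF M s] .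
  have Rq: "x \<bullet> (?R *\<^sub>v x) = x \<bullet> (M *\<^sub>v x) - \<mu> * (x \<bullet> x)" if x: "x \<in> carrier_vec N" for x
    using x M by (simp add: charmat_vec scalar_prod_add_distrib[of x N])
  have Rpsd: "x \<bullet> (?R *\<^sub>v x) \<ge> 0" if x: "x \<in> carrier_vec N" for x
    using Rq[OF x] low[OF x] by simp
  have "det ?R = 0"
  proof (rule ccontr)
    assume d: "det ?R \<noteq> 0"
    from det_non_zero_imp_unit[OF R d, of "()"]
    obtain Ri where Ri: "Ri \<in> carrier_mat N N" "?R * Ri = 1\<^sub>m N" "Ri * ?R = 1\<^sub>m N"
      unfolding Units_def ring_mat_def by auto
    define K' where "K' = (\<Sum>i<N. \<Sum>j<N. \<bar>Ri $$ (i, j)\<bar>) + 1"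
    have K'pos: "K' > 0" unfolding K'_def by (simp add: add_nonneg_pos sum_nonneg)
    have key: "x \<bullet> x \<le> K' * (x \<bullet> (?R *\<^sub>v x))" if x: "x \<in> carrier_vec N" for x
    proof -
      let ?w = "Ri *\<^sub>v x"
      have w: "?w \<in> carrier_vec N" using Ri x by simp
      have "?R *\<^sub>v ?w = (?R * Ri) *\<^sub>v x" using R Ri x by (simp add: assoc_mult_mat_vec[symmetric])
      then have Rw: "?R *\<^sub>v ?w = x" using Ri x by simp
      have "(x \<bullet> (?R *\<^sub>v ?w))\<^sup>2 \<le> (x \<bullet> (?R *\<^sub>v x)) * (?w \<bullet> (?R *\<^sub>v ?w))"
        by (rule cs_psd[OF R Rs Rpsd x w])
      then have c1: "(x \<bullet> x)\<^sup>2 \<le> (x \<bullet> (?R *\<^sub>v x)) * (x \<bullet> ?w)"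
        using Rw comm_scalar_prod[OF w x] by simp
      have "x \<bullet> ?w \<le> \<bar>x \<bullet> ?w\<bar>" by simp
      also have "\<dots> \<le> (K' - 1) * (x \<bullet> x)" using qf_abs_bound[OF Ri(1) x] unfolding K'_def by simp
      also have "\<dots> \<le> K' * (x \<bullet> x)" using sp_self_ge[OF x] by (simp add: algebra_simps)
      finally have c2: "x \<bullet> ?w \<le> K' * (x \<bullet> x)" .
      have "(x \<bullet> x)\<^sup>2 \<le> (x \<bullet> (?R *\<^sub>v x)) * (K' * (x \<bullet> x))"
        using c1 c2 Rpsd[OF x] by (meson mult_left_mono order_trans)
      then have "(x \<bullet> x) * (x \<bullet> x) \<le> (K' * (x \<bullet> (?R *\<^sub>v x))) * (x \<bullet> x)"
        by (simp add: power2_eq_square algebra_simps)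
      then show ?thesis
        using sp_self_ge[OF x] Rpsd[OF x] K'pos
        by (cases "x \<bullet> x = 0") (auto simp: mult_le_cancel_right)
    qed
    have "\<mu> + 1 / K' \<le> Inf Q"
    proof (rule cInf_greatest[OF Qne])
      fix q assume "q \<in> Q"
      then obtain x where x: "x \<in> carrier_vec N" "x \<bullet> x = 1" "q = x \<bullet> (M *\<^sub>v x)" unfolding Q_def by (elim imageE) auto
      have "1 \<le> K' * (q - \<mu>)" using key[OF x(1)] Rq[OF x(1)] x by simp
      then have "1 / K' \<le> q - \<mu>" using K'pos by (simp add: field_simps)
      then show "\<mu> + 1 / K' \<le> q" by simp
    qed
    then show False using K'pos unfolding \<mu>_def by simp
  qed
  then have "eigenvalue M \<mu>" using eigenvalue_det[OF M] by simp
  then show ?thesis using low by blast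
qed

lemma eig_pos:
  fixes M :: "real mat"
  assumes pd: "sym_posdef M N" and e: "eigenvalue M k"
  shows "k > 0"
proof -
  have M: "M \<in> carrier_mat N N" using pd unfolding sym_posdef_def by auto
  obtain v where v: "v \<in> carrier_vec N" "v \<noteq> 0\<^sub>v N" "M *\<^sub>v v = k \<cdot>\<^sub>v v"
    using e M unfolding eigenvalue_def eigenvector_def by auto
  have "v \<bullet> (M *\<^sub>v v) > 0" using pd v unfolding sym_posdef_def by auto
  then have "k * (v \<bullet> v) > 0" using v by simp
  moreover have "v \<bullet> v > 0" using sp_self_pos[OF v(1,2)] .
  ultimately show ?thesis by (simp add: zero_less_mult_iff)
qed

lemma eig_neg:
  fixes M :: "real mat"
  assumes M: "M \<in> carrier_mat N N" and e: "eigenvalue (- M) k"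
  shows "eigenvalue M (- k)"
proof -
  obtain v where v: "v \<in> carrier_vec N" "v \<noteq> 0\<^sub>v N" "(- M) *\<^sub>v v = k \<cdot>\<^sub>v v"
    using e M unfolding eigenvalue_def eigenvector_def by auto
  have "M *\<^sub>v v = (- k) \<cdot>\<^sub>v v"
  proof (rule eq_vecI)
    fix i assume "i < dim_vec ((- k) \<cdot>\<^sub>v v)"
    then have i: "i < N" using v by simp
    have h: "- (M *\<^sub>v v) = k \<cdot>\<^sub>v v" using v M uminus_mult_mat_vec[of v M] by simp
    have hh: "- (row M i \<bullet> v) = k * v $ i" using arg_cong[OF h, of "\<lambda>w. w $ i"] i v M by simp
    show "(M *\<^sub>v v) $ i = ((- k) \<cdot>\<^sub>v v) $ i"
      using hh i v M by simp
  qed (use M v in simp)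
  then show ?thesis using v M unfolding eigenvalue_def eigenvector_def by auto
qed

lemma lmin_props:
  fixes M :: "real mat"
  assumes M: "M \<in> carrier_mat N N" and s: "transpose_mat M = M" and N: "0 < N"
  shows "eigenvalue M (lambda_min M)"
    "\<And>x :: real vec. x \<in> carrier_vec N \<Longrightarrow> lambda_min M * (x \<bullet> x) \<le> x \<bullet> (M *\<^sub>v x)"
proof -
  obtain \<mu> where mu: "eigenvalue M \<mu>" "\<forall>x\<in>carrier_vec N. \<mu> * (x \<bullet> x) \<le> x \<bullet> (M *\<^sub>v x)"
    using sym_min_eig[OF M s N] by blast
  have fin: "finite {k. eigenvalue M k}" using finite_eigs[OF M] .
  have ne: "{k. eigenvalue M k} \<noteq> {}" using mu by auto
  show "eigenvalue M (lambda_min M)" unfolding lambda_min_def using Min_in[OF fin ne] by simp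
  have le: "lambda_min M \<le> \<mu>" unfolding lambda_min_def using fin mu by (intro Min_le) auto
  fix x :: "real vec" assume x: "x \<in> carrier_vec N"
  have "lambda_min M * (x \<bullet> x) \<le> \<mu> * (x \<bullet> x)" using le sp_self_ge[OF x] by (rule mult_right_mono)
  also have "\<dots> \<le> x \<bullet> (M *\<^sub>v x)" using mu x by auto
  finally show "lambda_min M * (x \<bullet> x) \<le> x \<bullet> (M *\<^sub>v x)" .
qed

lemma lmax_props:
  fixes M :: "real mat"
  assumes M: "M \<in> carrier_mat N N" and s: "transpose_mat M = M" and N: "0 < N"
  shows "eigenvalue M (lambda_max M)"
    "\<And>x :: real vec. x \<in> carrier_vec N \<Longrightarrow> x \<bullet> (M *\<^sub>v x) \<le> lambda_max M * (x \<bullet> x)"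
proof -
  have M': "- M \<in> carrier_mat N N" using M by simp
  have s': "transpose_mat (- M) = - M" using s by (simp add: transpose_uminus)
  obtain \<mu> where mu: "eigenvalue (- M) \<mu>" "\<forall>x\<in>carrier_vec N. \<mu> * (x \<bullet> x) \<le> x \<bullet> ((- M) *\<^sub>v x)"
    using sym_min_eig[OF M' s' N] by blast
  have e: "eigenvalue M (- \<mu>)" using eig_neg[OF M mu(1)] .
  have fin: "finite {k. eigenvalue M k}" using finite_eigs[OF M] .
  have ne: "{k. eigenvalue M k} \<noteq> {}" using e by auto
  show "eigenvalue M (lambda_max M)" unfolding lambda_max_def using Max_in[OF fin ne] by simp
  have le: "- \<mu> \<le> lambda_max M" unfolding lambda_max_def using fin e by (intro Max_ge) auto
  fix x :: "real vec" assume x: "x \<in> carrier_vec N"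
  have "x \<bullet> ((- M) *\<^sub>v x) = - (x \<bullet> (M *\<^sub>v x))"
    using x M uminus_mult_mat_vec[of x M] by (simp add: scalar_prod_uminus_right)
  then have "x \<bullet> (M *\<^sub>v x) \<le> (- \<mu>) * (x \<bullet> x)" using mu x by force
  also have "\<dots> \<le> lambda_max M * (x \<bullet> x)" using le sp_self_ge[OF x] by (rule mult_right_mono)
  finally show "x \<bullet> (M *\<^sub>v x) \<le> lambda_max M * (x \<bullet> x)" .
qed

lemma lmin_pos:
  assumes pd: "sym_posdef M N" and N: "0 < N"
  shows "lambda_min M > 0"
proof -
  have M: "M \<in> carrier_mat N N" "transpose_mat M = M" using pd unfolding sym_posdef_def by auto
  show ?thesis using eig_pos[OF pd lmin_props(1)[OF M N]] .
qed

lemma lmax_pos: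
  assumes pd: "sym_posdef M N" and N: "0 < N"
  shows "lambda_max M > 0"
proof -
  have M: "M \<in> carrier_mat N N" "transpose_mat M = M" using pd unfolding sym_posdef_def by auto
  show ?thesis using eig_pos[OF pd lmax_props(1)[OF M N]] .
qed

lemma sum_blocks:
  fixes g :: "nat \<Rightarrow> 'a::comm_monoid_add"
  shows "(\<Sum>r<n * l. g r) = (\<Sum>b<l. \<Sum>i<n. g (b * n + i))"
proof (cases "n = 0")
  case True then show ?thesis by simp
next
  case False
  then have n: "n > 0" by simp
  have "(\<Sum>b<l. \<Sum>i<n. g (b * n + i)) = (\<Sum>(b, i) \<in> {..<l} \<times> {..<n}. g (b * n + i))"
    by (simp add: sum.cartesian_product)
  also have "\<dots> = (\<Sum>r<n * l. g r)"
  proof (rule sum.reindex_bij_witness[where i = "\<lambda>r. (r div n, r mod n)" and j = "\<lambda>(b, i). b * n + i"])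
    fix a assume "a \<in> {..<l} \<times> {..<n}"
    then obtain b i where a: "a = (b, i)" "b < l" "i < n" by auto
    have "b * n + i < (b + 1) * n" using a by simp
    also have "\<dots> \<le> l * n" using a by (intro mult_right_mono) auto
    finally show "(case a of (b, i) \<Rightarrow> b * n + i) \<in> {..<n * l}" using a by (simp add: mult.commute)
    show "((case a of (b, i) \<Rightarrow> b * n + i) div n, (case a of (b, i) \<Rightarrow> b * n + i) mod n) = a"
      using a n by simp
    show "g (case a of (b, i) \<Rightarrow> b * n + i) = (case a of (b, i) \<Rightarrow> g (b * n + i))" using a by simp
  next
    fix r assume r: "r \<in> {..<n * l}"
    then have "r div n < l" using n by (simp add: div_less_iff_less_mult mult.commute)
    then show "(r div n, r mod n) \<in> {..<l} \<times> {..<n}" using n by simp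
    show "(case (r div n, r mod n) of (b, i) \<Rightarrow> b * n + i) = r" by simp
  qed
  finally show ?thesis by simp
qed

lemma qf_block:
  fixes Y :: "nat \<Rightarrow> real mat"
  assumes x: "x \<in> carrier_vec (n * l)"
  shows "(\<Sum>r<n * l. \<Sum>c<n * l. x $ r * (if r div n = c div n then Y (r div n) $$ (r mod n, c mod n) else 0) * x $ c)
       = (\<Sum>b<l. \<Sum>i<n. \<Sum>j<n. x $ (b * n + i) * Y b $$ (i, j) * x $ (b * n + j))"
proof (cases "n = 0")
  case True then show ?thesis by simp
next
  case False
  then have n: "n > 0" by simp
  have "(\<Sum>r<n * l. \<Sum>c<n * l. x $ r * (if r div n = c div n then Y (r div n) $$ (r mod n, c mod n) else 0) * x $ c)
      = (\<Sum>b<l. \<Sum>i<n. \<Sum>b'<l. \<Sum>j<n. x $ (b * n + i) * (if b = b' then Y b $$ (i, j) else 0) * x $ (b' * n + j))"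
    unfolding sum_blocks[of _ n l] by (intro sum.cong refl) auto
  also have "\<dots> = (\<Sum>b<l. \<Sum>i<n. \<Sum>j<n. x $ (b * n + i) * Y b $$ (i, j) * x $ (b * n + j))"
  proof (rule sum.cong[OF refl], rule sum.cong[OF refl])
    fix b i assume b: "b \<in> {..<l}" and i: "i \<in> {..<n}"
    have "(\<Sum>b'<l. \<Sum>j<n. x $ (b * n + i) * (if b = b' then Y b $$ (i, j) else 0) * x $ (b' * n + j))
        = (\<Sum>b'<l. if b' = b then (\<Sum>j<n. x $ (b * n + i) * Y b $$ (i, j) * x $ (b * n + j)) else 0)"
      by (intro sum.cong refl) auto
    also have "\<dots> = (\<Sum>j<n. x $ (b * n + i) * Y b $$ (i, j) * x $ (b * n + j))" using b by simp
    finally show "(\<Sum>b'<l. \<Sum>j<n. x $ (b * n + i) * (if b = b' then Y b $$ (i, j) else 0) * x $ (b' * n + j))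
        = (\<Sum>j<n. x $ (b * n + i) * Y b $$ (i, j) * x $ (b * n + j))" .
  qed
  finally show ?thesis .
qed

lemma Z_pd:
  assumes n: "n > 0" and l: "l > 0" and X0: "sym_posdef X0 n" and W: "sym_posdef W n"
  shows "sym_posdef (Zmat n l X0 W) (n * l)"
proof -
  define Y where "Y = (\<lambda>b::nat. if b = 0 then X0 else W)"
  have Ypd: "sym_posdef (Y b) n" for b using X0 W unfolding Y_def by auto
  have Yc: "Y b \<in> carrier_mat n n" for b using Ypd[of b] unfolding sym_posdef_def by auto
  have Ys: "Y b $$ (j, i) = Y b $$ (i, j)" if "i < n" "j < n" for b i j
  proof -
    have "transpose_mat (Y b) = Y b" using Ypd[of b] unfolding sym_posdef_def by auto
    moreover have "Y b $$ (j, i) = transpose_mat (Y b) $$ (i, j)" using that Yc[of b] by simp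
    ultimately show ?thesis by simp
  qed
  have Zdef: "Zmat n l X0 W = mat (n * l) (n * l)
     (\<lambda>(r, c). if r div n = c div n then Y (r div n) $$ (r mod n, c mod n) else 0)"
    unfolding Zmat_def Y_def by simp
  let ?Z = "Zmat n l X0 W"
  have Zc: "?Z \<in> carrier_mat (n * l) (n * l)" unfolding Zdef by simp
  have Zs: "transpose_mat ?Z = ?Z"
    unfolding Zdef using n by (intro eq_matI) (auto simp: Ys)
  have pos: "v \<bullet> (?Z *\<^sub>v v) > 0" if v: "v \<in> carrier_vec (n * l)" "v \<noteq> 0\<^sub>v (n * l)" for v
  proof -
    define vb where "vb = (\<lambda>b. vec n (\<lambda>i. v $ (b * n + i)))"
    have vbc: "vb b \<in> carrier_vec n" for b unfolding vb_def by simp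
    have "v \<bullet> (?Z *\<^sub>v v) = (\<Sum>r<n * l. \<Sum>c<n * l. v $ r * ?Z $$ (r, c) * v $ c)"
      using qf_sum[OF Zc v(1)] .
    also have "\<dots> = (\<Sum>r<n * l. \<Sum>c<n * l. v $ r * (if r div n = c div n then Y (r div n) $$ (r mod n, c mod n) else 0) * v $ c)"
      unfolding Zdef by (intro sum.cong refl) simp
    also have "\<dots> = (\<Sum>b<l. \<Sum>i<n. \<Sum>j<n. v $ (b * n + i) * Y b $$ (i, j) * v $ (b * n + j))"
      using qf_block[OF v(1)] .
    also have "\<dots> = (\<Sum>b<l. vb b \<bullet> (Y b *\<^sub>v vb b))"
    proof (rule sum.cong[OF refl])
      fix b assume "b \<in> {..<l}"
      have "vb b \<bullet> (Y b *\<^sub>v vb b) = (\<Sum>i<n. \<Sum>j<n. vb b $ i * Y b $$ (i, j) * vb b $ j)"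
        by (rule qf_sum[OF Yc vbc])
      also have "\<dots> = (\<Sum>i<n. \<Sum>j<n. v $ (b * n + i) * Y b $$ (i, j) * v $ (b * n + j))"
        unfolding vb_def by (intro sum.cong refl) auto
      finally show "(\<Sum>i<n. \<Sum>j<n. v $ (b * n + i) * Y b $$ (i, j) * v $ (b * n + j)) = vb b \<bullet> (Y b *\<^sub>v vb b)" by simp
    qed
    finally have eq: "v \<bullet> (?Z *\<^sub>v v) = (\<Sum>b<l. vb b \<bullet> (Y b *\<^sub>v vb b))" .
    have ge: "vb b \<bullet> (Y b *\<^sub>v vb b) \<ge> 0" for b using pd_psd[OF Ypd[of b]] vbc[of b] unfolding psd_def by auto
    obtain r where r: "r < n * l" "v $ r \<noteq> 0"
      using v by (metis carrier_vecD eq_vecI index_zero_vec(1) index_zero_vec(2))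
    let ?b = "r div n"
    have rb: "?b * n + r mod n = r" by simp
    have bl: "?b < l" using r n by (simp add: div_less_iff_less_mult mult.commute)
    have "vb ?b \<noteq> 0\<^sub>v n"
    proof
      assume "vb ?b = 0\<^sub>v n"
      then have "vb ?b $ (r mod n) = 0" using n by simp
      then show False using r n rb unfolding vb_def by simp
    qed
    then have "vb ?b \<bullet> (Y ?b *\<^sub>v vb ?b) > 0" using Ypd[of ?b] vbc[of ?b] unfolding sym_posdef_def by auto
    moreover have "vb ?b \<bullet> (Y ?b *\<^sub>v vb ?b) \<le> (\<Sum>b<l. vb b \<bullet> (Y b *\<^sub>v vb b))"
      using bl ge by (intro member_le_sum) auto
    ultimately show ?thesis using eq by simp
  qed
  show ?thesis unfolding sym_posdef_def using Zc Zs pos by auto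
qed

lemma L_pd:
  assumes n: "n > 0" and l: "l > 0" and X0: "sym_posdef X0 n" and W: "sym_posdef W n"
  shows "sym_posdef (Lmat n l X0 W) (n * l)"
  unfolding Lmat_def by (rule pd_inv_pd[OF Z_pd[OF assms]])

definition gv :: "nat \<Rightarrow> nat \<Rightarrow> real mat \<Rightarrow> real mat \<Rightarrow> (nat \<Rightarrow> real) \<Rightarrow> nat \<Rightarrow> nat \<Rightarrow> real vec" where
  "gv n l A C \<sigma> i t = vec (n * l) (\<lambda>c. (\<Sum>a<n. C $$ (i, a) * Phi n l A $$ (t * n + a, c)) / \<sigma> i)"

definition Uf :: "nat \<Rightarrow> nat \<Rightarrow> real mat \<Rightarrow> real mat \<Rightarrow> (nat \<Rightarrow> real) \<Rightarrow> nat set \<Rightarrow> real mat" where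
  "Uf n l A C \<sigma> S = mat (n * l) (n * l) (\<lambda>(r, c). \<Sum>i\<in>S. \<Sum>t<l. gv n l A C \<sigma> i t $ r * gv n l A C \<sigma> i t $ c)"

lemma gv_carrier[simp]: "gv n l A C \<sigma> i t \<in> carrier_vec (n * l)"
  unfolding gv_def by simp

lemma Uf_carrier[simp]: "Uf n l A C \<sigma> S \<in> carrier_mat (n * l) (n * l)"
  unfolding Uf_def by simp

lemma Uf_sym: "transpose_mat (Uf n l A C \<sigma> S) = Uf n l A C \<sigma> S"
  unfolding Uf_def by (intro eq_matI) (auto simp: mult.commute)

lemma Uf_empty: "Uf n l A C \<sigma> {} = 0\<^sub>m (n * l) (n * l)"
  unfolding Uf_def by (intro eq_matI) auto

lemma Uf_union:
  assumes "finite S" "finite T" "S \<inter> T = {}"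
  shows "Uf n l A C \<sigma> (S \<union> T) = Uf n l A C \<sigma> S + Uf n l A C \<sigma> T"
  unfolding Uf_def using assms by (intro eq_matI) (auto simp: sum.union_disjoint)

lemma Uf_qf:
  fixes x :: "real vec"
  assumes x: "x \<in> carrier_vec (n * l)" and S: "finite S"
  shows "x \<bullet> (Uf n l A C \<sigma> S *\<^sub>v x) = (\<Sum>i\<in>S. \<Sum>t<l. (gv n l A C \<sigma> i t \<bullet> x)\<^sup>2)"
proof -
  let ?N = "n * l"
  let ?g = "gv n l A C \<sigma>"
  let ?K = "S \<times> {..<l}"
  define F where "F = (\<lambda>k r c. (?g (fst k) (snd k) $ r * x $ r) * (?g (fst k) (snd k) $ c * x $ c))"
  have "x \<bullet> (Uf n l A C \<sigma> S *\<^sub>v x) = (\<Sum>r<?N. \<Sum>c<?N. x $ r * Uf n l A C \<sigma> S $$ (r, c) * x $ c)"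
    by (rule qf_sum[OF Uf_carrier x])
  also have "\<dots> = (\<Sum>r<?N. \<Sum>c<?N. \<Sum>k\<in>?K. F k r c)"
  proof (rule sum.cong[OF refl], rule sum.cong[OF refl])
    fix r c assume r: "r \<in> {..<?N}" and c: "c \<in> {..<?N}"
    have "Uf n l A C \<sigma> S $$ (r, c) = (\<Sum>k\<in>?K. ?g (fst k) (snd k) $ r * ?g (fst k) (snd k) $ c)"
      unfolding Uf_def using r c by (simp add: sum.cartesian_product case_prod_beta)
    then show "x $ r * Uf n l A C \<sigma> S $$ (r, c) * x $ c = (\<Sum>k\<in>?K. F k r c)"
      unfolding F_def by (simp add: sum_distrib_left sum_distrib_right algebra_simps)
  qed
  also have "\<dots> = (\<Sum>r<?N. \<Sum>k\<in>?K. \<Sum>c<?N. F k r c)"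
    by (rule sum.cong[OF refl]) (rule sum.swap)
  also have "\<dots> = (\<Sum>k\<in>?K. \<Sum>r<?N. \<Sum>c<?N. F k r c)"
    by (rule sum.swap)
  also have "\<dots> = (\<Sum>k\<in>?K. (?g (fst k) (snd k) \<bullet> x)\<^sup>2)"
  proof (rule sum.cong[OF refl])
    fix k
    have "(?g (fst k) (snd k) \<bullet> x)\<^sup>2 = (\<Sum>r<?N. ?g (fst k) (snd k) $ r * x $ r) * (\<Sum>c<?N. ?g (fst k) (snd k) $ c * x $ c)"
      using x by (simp add: sp_sum[of x ?N] power2_eq_square)
    also have "\<dots> = (\<Sum>r<?N. \<Sum>c<?N. F k r c)"
      unfolding F_def by (rule sum_product)
    finally show "(\<Sum>r<?N. \<Sum>c<?N. F k r c) = (?g (fst k) (snd k) \<bullet> x)\<^sup>2" by simp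
  qed
  also have "\<dots> = (\<Sum>i\<in>S. \<Sum>t<l. (?g i t \<bullet> x)\<^sup>2)"
    by (simp add: sum.cartesian_product case_prod_beta)
  finally show ?thesis .
qed

lemma Uf_psd: "finite S \<Longrightarrow> psd (Uf n l A C \<sigma> S) (n * l)"
  unfolding psd_def using Uf_sym Uf_qf by (auto intro!: sum_nonneg)

lemma mat_inv_eq:
  fixes M B :: "real mat"
  assumes M: "M \<in> carrier_mat k k" and B: "B \<in> carrier_mat k k"
    and h1: "M * B = 1\<^sub>m k" and h2: "B * M = 1\<^sub>m k"
  shows "mat_inv M = B"
proof -
  have d: "dim_row M = k" using M by simp
  have ex: "\<exists>B. B \<in> carrier_mat k k \<and> M * B = 1\<^sub>m k \<and> B * M = 1\<^sub>m k" using B h1 h2 by blast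
  have "mat_inv M \<in> carrier_mat k k \<and> M * mat_inv M = 1\<^sub>m k \<and> mat_inv M * M = 1\<^sub>m k"
    using ex unfolding mat_inv_def d by (rule someI_ex)
  then show ?thesis using inv_unique[OF M B, of "mat_inv M"] h2 by auto
qed

lemma diag_mult:
  "mat k k (\<lambda>(r, c). if r = c then d1 r else 0) * mat k k (\<lambda>(r, c). if r = c then d2 r else 0)
   = mat k k (\<lambda>(r, c). if r = c then d1 r * d2 r else (0::real))"
proof (rule eq_matI)
  fix r c assume r: "r < dim_row (mat k k (\<lambda>(r, c). if r = c then d1 r * d2 r else (0::real)))"
    and c: "c < dim_col (mat k k (\<lambda>(r, c). if r = c then d1 r * d2 r else (0::real)))"
  then have r: "r < k" and c: "c < k" by auto
  have "(\<Sum>j<k. (if r = j then d1 r else 0) * (if j = c then d2 j else 0)) =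
        (\<Sum>j<k. if j = r then (if r = c then d1 r * d2 r else 0) else 0)"
    by (intro sum.cong refl) auto
  also have "\<dots> = (if r = c then d1 r * d2 r else 0)" using r by simp
  finally show "(mat k k (\<lambda>(r, c). if r = c then d1 r else 0) * mat k k (\<lambda>(r, c). if r = c then d2 r else 0)) $$ (r, c)
      = mat k k (\<lambda>(r, c). if r = c then d1 r * d2 r else 0) $$ (r, c)"
    using r c by (simp add: sp_sum[of _ k])
qed auto

lemma diag_one:
  assumes "\<And>r. r < k \<Longrightarrow> d r = 1"
  shows "mat k k (\<lambda>(r, c). if r = c then d r else (0::real)) = 1\<^sub>m k"
  using assms by (intro eq_matI) auto

lemma sum_sl:
  assumes S: "finite S"
  shows "(\<Sum>q<card S. F (sorted_list_of_set S ! q)) = (\<Sum>i\<in>S. F i)"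
proof -
  have "bij_betw ((!) (sorted_list_of_set S)) {..<card S} S"
    using S by (intro bij_betw_nth) auto
  from sum.reindex_bij_betw[OF this] show ?thesis .
qed

lemma Umat_eq:
  assumes C: "C \<in> carrier_mat p n" and \<sigma>: "\<forall>i<p. \<sigma> i > 0" and S: "S \<subseteq> {..<p}"
  shows "Umat n p l A C \<sigma> S = Uf n l A C \<sigma> S"
proof (cases "S = {}")
  case True then show ?thesis unfolding Umat_def by (simp add: Uf_empty)
next
  case False
  have fin: "finite S" using S finite_subset by blast
  define xs where "xs = sorted_list_of_set S"
  define \<theta> where "\<theta> = (\<lambda>q. xs ! q)"
  define s where "s = card S"
  have spos: "s > 0" using fin False unfolding s_def by (simp add: card_gt_0_iff)
  have lxs: "length xs = s" unfolding xs_def s_def by simp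
  have dxs: "distinct xs" unfolding xs_def by simp
  have sxs: "set xs = S" unfolding xs_def using fin by simp
  have \<theta>S: "\<theta> q \<in> S" if "q < s" for q using that lxs sxs unfolding \<theta>_def by auto
  have \<theta>p: "\<theta> q < p" if "q < s" for q using \<theta>S[OF that] S by auto
  have \<theta>inj: "(\<theta> q = \<theta> q') = (q = q')" if "q < s" "q' < s" for q q'
    unfolding \<theta>_def using nth_eq_iff_index_eq[OF dxs] that lxs by simp
  have \<sigma>pos: "\<sigma> (\<theta> q) > 0" if "q < s" for q using \<sigma> \<theta>p[OF that] by simp
  define N where "N = n * l"
  define P where "P = Phi n l A"
  have P: "P \<in> carrier_mat N N" unfolding P_def Phi_def N_def by simp
  define sel where "sel = sel_mat p S"
  have sel: "sel \<in> carrier_mat s p" unfolding sel_def sel_mat_def s_def by simp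
  have sele: "sel $$ (q, j) = (if j = \<theta> q then 1 else 0)" if "q < s" "j < p" for q j
    using that unfolding sel_def sel_mat_def \<theta>_def xs_def s_def by simp
  define SC where "SC = sel * C"
  have SC: "SC \<in> carrier_mat s n" unfolding SC_def using sel C by simp
  have SCe: "SC $$ (q, a) = C $$ (\<theta> q, a)" if q: "q < s" and a: "a < n" for q a
  proof -
    have "SC $$ (q, a) = (\<Sum>j<p. sel $$ (q, j) * C $$ (j, a))"
      unfolding SC_def using sel C q a by (simp add: sp_sum[of _ p])
    also have "\<dots> = (\<Sum>j<p. if j = \<theta> q then C $$ (\<theta> q, a) else 0)"
      using q by (intro sum.cong refl) (simp add: sele)
    also have "\<dots> = C $$ (\<theta> q, a)" using \<theta>p[OF q] by simp
    finally show ?thesis .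
  qed
  define V where "V = Vmat p \<sigma>"
  have V: "V \<in> carrier_mat p p" unfolding V_def Vmat_def by simp
  define SV0 where "SV0 = sel * V"
  have SV0: "SV0 \<in> carrier_mat s p" unfolding SV0_def using sel V by simp
  define SV where "SV = SV0 * transpose_mat sel"
  have SV: "SV \<in> carrier_mat s s" unfolding SV_def using SV0 sel by simp
  have SVe: "SV $$ (q, q') = (if q = q' then (\<sigma> (\<theta> q))\<^sup>2 else 0)" if q: "q < s" and q': "q' < s" for q q'
  proof -
    have sVe: "SV0 $$ (q, j) = (if j = \<theta> q then (\<sigma> (\<theta> q))\<^sup>2 else 0)" if j: "j < p" for j
    proof -
      have "SV0 $$ (q, j) = (\<Sum>k<p. sel $$ (q, k) * V $$ (k, j))"
        unfolding SV0_def using sel V q j by (simp add: sp_sum[of _ p])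
      also have "\<dots> = (\<Sum>k<p. if k = \<theta> q then V $$ (\<theta> q, j) else 0)"
        using q by (intro sum.cong refl) (simp add: sele)
      also have "\<dots> = V $$ (\<theta> q, j)" using \<theta>p[OF q] by simp
      also have "\<dots> = (if j = \<theta> q then (\<sigma> (\<theta> q))\<^sup>2 else 0)"
        using \<theta>p[OF q] j unfolding V_def Vmat_def by auto
      finally show ?thesis .
    qed
    have "SV $$ (q, q') = (\<Sum>j<p. SV0 $$ (q, j) * transpose_mat sel $$ (j, q'))"
      unfolding SV_def using sel SV0 q q' by (simp add: sp_sum[of _ p])
    also have "\<dots> = (\<Sum>j<p. if j = \<theta> q then (\<sigma> (\<theta> q))\<^sup>2 * sel $$ (q', \<theta> q) else 0)"
      using q q' sel by (intro sum.cong refl) (auto simp: sVe)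
    also have "\<dots> = (\<sigma> (\<theta> q))\<^sup>2 * sel $$ (q', \<theta> q)" using \<theta>p[OF q] by simp
    also have "\<dots> = (if q = q' then (\<sigma> (\<theta> q))\<^sup>2 else 0)"
      using sele[OF q' \<theta>p[OF q]] \<theta>inj[OF q q'] by auto
    finally show ?thesis .
  qed
  define VS where "VS = blockdiag l SV"
  define Dg where "Dg = mat (l * s) (l * s) (\<lambda>(r, c). if r = c then (\<sigma> (\<theta> (r mod s)))\<^sup>2 else 0)"
  define Di where "Di = mat (l * s) (l * s) (\<lambda>(r, c). if r = c then 1 / (\<sigma> (\<theta> (r mod s)))\<^sup>2 else 0)"
  have VSD: "VS = Dg"
  proof -
    have "(if r div s = c div s then SV $$ (r mod s, c mod s) else 0) =
          (if r = c then (\<sigma> (\<theta> (r mod s)))\<^sup>2 else 0)" (is "?L r c = ?R r c") for r c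
    proof -
      have rm: "r mod s < s" "c mod s < s" using spos by auto
      have "r = c \<longleftrightarrow> r div s = c div s \<and> r mod s = c mod s"
        by (metis div_mult_mod_eq)
      then show ?thesis using SVe[OF rm] by auto
    qed
    then have ent: "(\<lambda>(r, c). ?L r c) = (\<lambda>(r, c). ?R r c)" by auto
    have dd: "dim_row SV = s" "dim_col SV = s" using SV by auto
    show ?thesis unfolding VS_def Dg_def blockdiag_def dd ent ..
  qed
  have Vi: "mat_inv VS = Di"
  proof (rule mat_inv_eq)
    show "VS \<in> carrier_mat (l * s) (l * s)" unfolding VSD Dg_def by simp
    show "Di \<in> carrier_mat (l * s) (l * s)" unfolding Di_def by simp
    have nz: "\<sigma> (\<theta> (r mod s)) \<noteq> 0" for r using \<sigma>pos[of "r mod s"] spos by simp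
    show "VS * Di = 1\<^sub>m (l * s)" unfolding VSD Dg_def Di_def diag_mult
      by (rule diag_one) (simp add: nz)
    show "Di * VS = 1\<^sub>m (l * s)" unfolding VSD Dg_def Di_def diag_mult
      by (rule diag_one) (simp add: nz)
  qed
  define BD where "BD = blockdiag l SC"
  have BD: "BD \<in> carrier_mat (l * s) (l * n)" unfolding BD_def blockdiag_def using carrier_matD[OF SC] by simp
  have BDe: "BD $$ (k, m) = (if k div s = m div n then SC $$ (k mod s, m mod n) else 0)"
    if "k < l * s" "m < l * n" for k m
    unfolding BD_def blockdiag_def using carrier_matD[OF SC] that by simp
  define G where "G = BD * P"
  have G: "G \<in> carrier_mat (l * s) N" unfolding G_def using BD P by (simp add: N_def mult.commute)
  have Ge: "G $$ (k, c) = \<sigma> (\<theta> (k mod s)) * gv n l A C \<sigma> (\<theta> (k mod s)) (k div s) $ c"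
    if k: "k < l * s" and c: "c < N" for k c
  proof -
    have km: "k mod s < s" using spos by simp
    have kd: "k div s < l" using k spos by (simp add: div_less_iff_less_mult)
    have "G $$ (k, c) = (\<Sum>m<n * l. BD $$ (k, m) * P $$ (m, c))"
      unfolding G_def using BD P k c by (simp add: sp_sum[of _ "n * l"] N_def mult.commute)
    also have "\<dots> = (\<Sum>b<l. \<Sum>a<n. BD $$ (k, b * n + a) * P $$ (b * n + a, c))"
      by (rule sum_blocks)
    also have "\<dots> = (\<Sum>b<l. if b = k div s then (\<Sum>a<n. C $$ (\<theta> (k mod s), a) * P $$ ((k div s) * n + a, c)) else 0)"
    proof (rule sum.cong[OF refl])
      fix b assume b: "b \<in> {..<l}"
      have "(\<Sum>a<n. BD $$ (k, b * n + a) * P $$ (b * n + a, c)) =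
            (\<Sum>a<n. if b = k div s then C $$ (\<theta> (k mod s), a) * P $$ ((k div s) * n + a, c) else 0)"
      proof (rule sum.cong[OF refl])
        fix a assume a: "a \<in> {..<n}"
        have "b * n + a < (b + 1) * n" using a by simp
        also have "\<dots> \<le> l * n" using b by (intro mult_right_mono) auto
        finally have m: "b * n + a < l * n" .
        have dm: "(b * n + a) div n = b" "(b * n + a) mod n = a" using a by auto
        show "BD $$ (k, b * n + a) * P $$ (b * n + a, c) =
            (if b = k div s then C $$ (\<theta> (k mod s), a) * P $$ ((k div s) * n + a, c) else 0)"
          using BDe[OF k m] dm SCe[OF km] a by auto
      qed
      then show "(\<Sum>a<n. BD $$ (k, b * n + a) * P $$ (b * n + a, c)) =
           (if b = k div s then (\<Sum>a<n. C $$ (\<theta> (k mod s), a) * P $$ ((k div s) * n + a, c)) else 0)"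
        by simp
    qed
    also have "\<dots> = (\<Sum>a<n. C $$ (\<theta> (k mod s), a) * P $$ ((k div s) * n + a, c))"
      using kd by simp
    also have "\<dots> = \<sigma> (\<theta> (k mod s)) * gv n l A C \<sigma> (\<theta> (k mod s)) (k div s) $ c"
      unfolding gv_def P_def using c \<sigma>pos[OF km] by (simp add: N_def)
    finally show ?thesis .
  qed
  have Ue: "(transpose_mat G * Di * G) $$ (r, c) =
      (\<Sum>i\<in>S. \<Sum>t<l. gv n l A C \<sigma> i t $ r * gv n l A C \<sigma> i t $ c)" if r: "r < N" and c: "c < N" for r c
  proof -
    let ?g = "gv n l A C \<sigma>"
    have GDe: "(transpose_mat G * Di) $$ (r, k) = G $$ (k, r) / (\<sigma> (\<theta> (k mod s)))\<^sup>2" if k: "k < l * s" for k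
    proof -
      have "(transpose_mat G * Di) $$ (r, k) = (\<Sum>k'<l * s. G $$ (k', r) * Di $$ (k', k))"
        using G r k unfolding Di_def by (simp add: sp_sum[of _ "l * s"])
      also have "\<dots> = (\<Sum>k'<l * s. if k' = k then G $$ (k, r) / (\<sigma> (\<theta> (k mod s)))\<^sup>2 else 0)"
        unfolding Di_def using k by (intro sum.cong refl) auto
      also have "\<dots> = G $$ (k, r) / (\<sigma> (\<theta> (k mod s)))\<^sup>2" using k by simp
      finally show ?thesis .
    qed
    have "(transpose_mat G * Di * G) $$ (r, c) = (\<Sum>k<l * s. (transpose_mat G * Di) $$ (r, k) * G $$ (k, c))"
      using G r c unfolding Di_def by (simp add: sp_sum[of _ "l * s"])
    also have "\<dots> = (\<Sum>k<l * s. ?g (\<theta> (k mod s)) (k div s) $ r * ?g (\<theta> (k mod s)) (k div s) $ c)"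
    proof (rule sum.cong[OF refl])
      fix k assume "k \<in> {..<l * s}"
      then have k: "k < l * s" by simp
      have km: "k mod s < s" using spos by simp
      show "(transpose_mat G * Di) $$ (r, k) * G $$ (k, c) = ?g (\<theta> (k mod s)) (k div s) $ r * ?g (\<theta> (k mod s)) (k div s) $ c"
        using GDe[OF k] Ge[OF k r] Ge[OF k c] \<sigma>pos[OF km] by (simp add: power2_eq_square field_simps)
    qed
    also have "\<dots> = (\<Sum>t<l. \<Sum>q<s. ?g (\<theta> q) t $ r * ?g (\<theta> q) t $ c)"
    proof -
      have "(\<Sum>k<l * s. ?g (\<theta> (k mod s)) (k div s) $ r * ?g (\<theta> (k mod s)) (k div s) $ c)
          = (\<Sum>t<l. \<Sum>q<s. ?g (\<theta> ((t * s + q) mod s)) ((t * s + q) div s) $ r * ?g (\<theta> ((t * s + q) mod s)) ((t * s + q) div s) $ c)"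
        using sum_blocks[of "\<lambda>k. ?g (\<theta> (k mod s)) (k div s) $ r * ?g (\<theta> (k mod s)) (k div s) $ c" s l]
        by (simp add: mult.commute)
      also have "\<dots> = (\<Sum>t<l. \<Sum>q<s. ?g (\<theta> q) t $ r * ?g (\<theta> q) t $ c)"
        by (intro sum.cong refl) auto
      finally show ?thesis .
    qed
    also have "\<dots> = (\<Sum>q<s. \<Sum>t<l. ?g (\<theta> q) t $ r * ?g (\<theta> q) t $ c)"
      by (rule sum.swap)
    also have "\<dots> = (\<Sum>i\<in>S. \<Sum>t<l. ?g i t $ r * ?g i t $ c)"
      unfolding s_def \<theta>_def xs_def by (rule sum_sl[OF fin])
    finally show ?thesis .
  qed
  have "Umat n p l A C \<sigma> S = transpose_mat G * Di * G"
    unfolding Umat_def Let_def using False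
    by (simp add: G_def BD_def SC_def sel_def P_def Vi[unfolded VS_def SV_def SV0_def sel_def V_def])
  also have "\<dots> = Uf n l A C \<sigma> S"
    unfolding Uf_def using G Ue by (intro eq_matI) (auto simp: N_def Di_def)
  finally show ?thesis .
qed

lemma bil_add:
  fixes A D :: "real mat"
  assumes "A \<in> carrier_mat N N" "D \<in> carrier_mat N N" "x \<in> carrier_vec N" "x' \<in> carrier_vec N"
  shows "x' \<bullet> ((A + D) *\<^sub>v x) = x' \<bullet> (A *\<^sub>v x) + x' \<bullet> (D *\<^sub>v x)"
  using assms by (simp add: add_mult_distrib_mat_vec scalar_prod_add_distrib[of x' N])

lemma trace_diff_V1:
  fixes A B D :: "real mat"
  assumes A: "sym_posdef A N" and B: "sym_posdef B N" and D: "D \<in> carrier_mat N N"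
    and Ds: "transpose_mat D = D" and BAD: "B = A + D" and e: "e \<in> carrier_vec N"
  defines "y \<equiv> mat_inv A *\<^sub>v e"
  shows "e \<bullet> (mat_inv A *\<^sub>v e) - e \<bullet> (mat_inv B *\<^sub>v e)
       = y \<bullet> (D *\<^sub>v y) - (D *\<^sub>v y) \<bullet> (mat_inv B *\<^sub>v (D *\<^sub>v y))"
proof -
  have Ac: "A \<in> carrier_mat N N" and As: "transpose_mat A = A" using A unfolding sym_posdef_def by auto
  have Bc: "B \<in> carrier_mat N N" and Bs: "transpose_mat B = B" using B unfolding sym_posdef_def by auto
  note Ai = pd_inv[OF A] and Bi = pd_inv[OF B]
  have Bis: "transpose_mat (mat_inv B) = mat_inv B" using pd_inv_sym[OF B] .
  let ?Bi = "mat_inv B"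
  let ?u = "?Bi *\<^sub>v e"
  let ?z = "?Bi *\<^sub>v (D *\<^sub>v y)"
  have y: "y \<in> carrier_vec N" unfolding y_def using Ai e by simp
  have u: "?u \<in> carrier_vec N" using Bi e by simp
  have Dy: "D *\<^sub>v y \<in> carrier_vec N" using D y by simp
  have z: "?z \<in> carrier_vec N" using Bi Dy by simp
  have Ay: "A *\<^sub>v y = e" unfolding y_def using pd_inv_vec[OF A e] by simp
  have Bu: "B *\<^sub>v ?u = e" using pd_inv_vec[OF B e] by simp
  have Bz: "B *\<^sub>v ?z = D *\<^sub>v y" using pd_inv_vec[OF B Dy] by simp
  have "e \<bullet> ?u = (A *\<^sub>v y) \<bullet> ?u" using Ay by simp
  also have "\<dots> = y \<bullet> (A *\<^sub>v ?u)" using sym_transfer[OF Ac As y u] by simp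
  also have "\<dots> = y \<bullet> (B *\<^sub>v ?u) - y \<bullet> (D *\<^sub>v ?u)" using bil_add[OF Ac D u y] BAD by simp
  also have "\<dots> = y \<bullet> e - y \<bullet> (D *\<^sub>v ?u)" using Bu by simp
  finally have c1: "e \<bullet> ?u = y \<bullet> e - y \<bullet> (D *\<^sub>v ?u)" .
  have "y \<bullet> (D *\<^sub>v ?u) = (D *\<^sub>v y) \<bullet> ?u" using sym_transfer[OF D Ds y u] .
  also have "\<dots> = (?Bi *\<^sub>v (D *\<^sub>v y)) \<bullet> e" using sym_transfer[OF Bi(1) Bis Dy e] by simp
  also have "\<dots> = ?z \<bullet> (A *\<^sub>v y)" using Ay by simp
  also have "\<dots> = (A *\<^sub>v ?z) \<bullet> y" using sym_transfer[OF Ac As z y] by simp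
  also have "\<dots> = y \<bullet> (A *\<^sub>v ?z)" using comm_scalar_prod[of "A *\<^sub>v ?z" N y] Ac z y by simp
  also have "\<dots> = y \<bullet> (B *\<^sub>v ?z) - y \<bullet> (D *\<^sub>v ?z)" using bil_add[OF Ac D z y] BAD by simp
  also have "\<dots> = y \<bullet> (D *\<^sub>v y) - (D *\<^sub>v y) \<bullet> ?z"
    using Bz sym_transfer[OF D Ds y z] by simp
  finally have c2: "y \<bullet> (D *\<^sub>v ?u) = y \<bullet> (D *\<^sub>v y) - (D *\<^sub>v y) \<bullet> ?z" .
  have "e \<bullet> y = y \<bullet> e" using comm_scalar_prod[OF e y] .
  then show ?thesis using c1 c2 unfolding y_def by simp
qed

lemma trace_diff_V2:
  fixes A B D :: "real mat"
  assumes A: "sym_posdef A N" and B: "sym_posdef B N" and D: "D \<in> carrier_mat N N"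
    and Ds: "transpose_mat D = D" and BAD: "B = A + D" and e: "e \<in> carrier_vec N"
  defines "w \<equiv> mat_inv B *\<^sub>v e"
  shows "e \<bullet> (mat_inv A *\<^sub>v e) - e \<bullet> (mat_inv B *\<^sub>v e)
       = w \<bullet> (D *\<^sub>v w) + (D *\<^sub>v w) \<bullet> (mat_inv A *\<^sub>v (D *\<^sub>v w))"
proof -
  have Ac: "A \<in> carrier_mat N N" and As: "transpose_mat A = A" using A unfolding sym_posdef_def by auto
  have Bc: "B \<in> carrier_mat N N" and Bs: "transpose_mat B = B" using B unfolding sym_posdef_def by auto
  note Ai = pd_inv[OF A] and Bi = pd_inv[OF B]
  have Ais: "transpose_mat (mat_inv A) = mat_inv A" using pd_inv_sym[OF A] .
  let ?Ai = "mat_inv A"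
  let ?y = "?Ai *\<^sub>v e"
  let ?v = "?Ai *\<^sub>v (D *\<^sub>v w)"
  have w: "w \<in> carrier_vec N" unfolding w_def using Bi e by simp
  have y: "?y \<in> carrier_vec N" using Ai e by simp
  have Dw: "D *\<^sub>v w \<in> carrier_vec N" using D w by simp
  have v: "?v \<in> carrier_vec N" using Ai Dw by simp
  have Bw: "B *\<^sub>v w = e" unfolding w_def using pd_inv_vec[OF B e] by simp
  have Ay: "A *\<^sub>v ?y = e" using pd_inv_vec[OF A e] by simp
  have Av: "A *\<^sub>v ?v = D *\<^sub>v w" using pd_inv_vec[OF A Dw] by simp
  have "e \<bullet> ?y = (B *\<^sub>v w) \<bullet> ?y" using Bw by simp
  also have "\<dots> = w \<bullet> (B *\<^sub>v ?y)" using sym_transfer[OF Bc Bs w y] by simp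
  also have "\<dots> = w \<bullet> (A *\<^sub>v ?y) + w \<bullet> (D *\<^sub>v ?y)" using bil_add[OF Ac D y w] BAD by simp
  also have "\<dots> = w \<bullet> e + w \<bullet> (D *\<^sub>v ?y)" using Ay by simp
  finally have c1: "e \<bullet> ?y = w \<bullet> e + w \<bullet> (D *\<^sub>v ?y)" .
  have "w \<bullet> (D *\<^sub>v ?y) = (D *\<^sub>v w) \<bullet> ?y" using sym_transfer[OF D Ds w y] .
  also have "\<dots> = ?v \<bullet> e" using sym_transfer[OF Ai(1) Ais Dw e] by simp
  also have "\<dots> = ?v \<bullet> (B *\<^sub>v w)" using Bw by simp
  also have "\<dots> = ?v \<bullet> (A *\<^sub>v w) + ?v \<bullet> (D *\<^sub>v w)" using bil_add[OF Ac D w v] BAD by simp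
  also have "\<dots> = (A *\<^sub>v ?v) \<bullet> w + ?v \<bullet> (D *\<^sub>v w)" using sym_transfer[OF Ac As v w] by simp
  also have "\<dots> = w \<bullet> (D *\<^sub>v w) + (D *\<^sub>v w) \<bullet> ?v"
    using Av comm_scalar_prod[OF Dw w] comm_scalar_prod[OF v Dw] by simp
  finally have c2: "w \<bullet> (D *\<^sub>v ?y) = w \<bullet> (D *\<^sub>v w) + (D *\<^sub>v w) \<bullet> ?v" .
  have "e \<bullet> w = w \<bullet> e" using comm_scalar_prod[OF e w] .
  then show ?thesis using c1 c2 unfolding w_def by simp
qed

lemma trace_unit:
  fixes M :: "real mat"
  assumes M: "M \<in> carrier_mat N N"
  shows "mat_trace M = (\<Sum>j<N. unit_vec N j \<bullet> (M *\<^sub>v unit_vec N j))"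
proof -
  have "unit_vec N j \<bullet> (M *\<^sub>v unit_vec N j) = M $$ (j, j)" if j: "j < N" for j
    using M j by (simp add: scalar_prod_left_unit)
  then show ?thesis unfolding mat_trace_def using M by simp
qed

lemma real_P:
  fixes a \<Lambda> X P Q R :: real
  assumes a: "a > 0" and L: "\<Lambda> > 0" and aL: "a \<le> \<Lambda>" and X: "X \<ge> 0" and P: "P \<ge> 0" and Q: "Q \<ge> 0"
    and h1: "a * X + P \<le> R" and h2: "P \<le> (\<Lambda> - a) * X" and h3: "R\<^sup>2 \<le> P * Q"
  shows "R \<le> (1 - a / \<Lambda>) * Q"
proof -
  define d where "d = \<Lambda> - a"
  have d: "d \<ge> 0" unfolding d_def using aL by simp
  have "a * P \<le> a * (d * X)" using h2 a unfolding d_def by (intro mult_left_mono) auto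
  then have "\<Lambda> * P \<le> d * (a * X + P)" unfolding d_def by (simp add: algebra_simps)
  also have "\<dots> \<le> d * R" using h1 d by (intro mult_left_mono) auto
  finally have lp: "\<Lambda> * P \<le> d * R" .
  have R0: "R \<ge> 0" using h1 a X P by (smt (verit) mult_nonneg_nonneg)
  have eq: "(1 - a / \<Lambda>) * Q = d * Q / \<Lambda>" unfolding d_def using L by (simp add: field_simps)
  show ?thesis
  proof (cases "R = 0")
    case True then show ?thesis using eq d Q L by simp
  next
    case False
    then have Rp: "R > 0" using R0 by simp
    have "\<Lambda> * R\<^sup>2 \<le> \<Lambda> * (P * Q)" using h3 L by (intro mult_left_mono) auto
    also have "\<dots> = (\<Lambda> * P) * Q" by simp
    also have "\<dots> \<le> (d * R) * Q" using lp Q by (intro mult_right_mono) auto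
    finally have "(\<Lambda> * R) * R \<le> (d * Q) * R" by (simp add: power2_eq_square algebra_simps)
    then have "\<Lambda> * R \<le> d * Q" using Rp by simp
    then have "R \<le> d * Q / \<Lambda>" using L by (simp add: field_simps)
    then show ?thesis using eq by simp
  qed
qed

lemma pointwise_P:
  fixes A B D :: "real mat" and a \<Lambda> :: real
  assumes A: "sym_posdef A N" and B: "sym_posdef B N" and D: "psd D N" and BAD: "B = A + D"
    and y: "y \<in> carrier_vec N"
    and alow: "\<And>x. x \<in> carrier_vec N \<Longrightarrow> a * (x \<bullet> x) \<le> x \<bullet> (A *\<^sub>v x)"
    and dup: "\<And>x. x \<in> carrier_vec N \<Longrightarrow> x \<bullet> (D *\<^sub>v x) \<le> (\<Lambda> - a) * (x \<bullet> x)"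
    and a: "a > 0" and L: "\<Lambda> > 0" and aL: "a \<le> \<Lambda>"
  shows "(D *\<^sub>v y) \<bullet> (mat_inv B *\<^sub>v (D *\<^sub>v y)) \<le> (1 - a / \<Lambda>) * (y \<bullet> (D *\<^sub>v y))"
proof -
  have Ac: "A \<in> carrier_mat N N" using A unfolding sym_posdef_def by auto
  have Dc: "D \<in> carrier_mat N N" and Ds: "transpose_mat D = D" and Dp: "\<And>v. v \<in> carrier_vec N \<Longrightarrow> v \<bullet> (D *\<^sub>v v) \<ge> 0"
    using D unfolding psd_def by auto
  note Bi = pd_inv[OF B]
  have Dy: "D *\<^sub>v y \<in> carrier_vec N" using Dc y by simp
  define x where "x = mat_inv B *\<^sub>v (D *\<^sub>v y)"
  have x: "x \<in> carrier_vec N" unfolding x_def using Bi Dy by simp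
  have Bx: "B *\<^sub>v x = D *\<^sub>v y" unfolding x_def using pd_inv_vec[OF B Dy] by simp
  define R where "R = (D *\<^sub>v y) \<bullet> x"
  have "x \<bullet> (B *\<^sub>v x) = R" unfolding R_def using Bx comm_scalar_prod[OF x Dy] by simp
  then have RAD: "R = x \<bullet> (A *\<^sub>v x) + x \<bullet> (D *\<^sub>v x)" using bil_add[OF Ac Dc x x] BAD by simp
  have cs: "(x \<bullet> (D *\<^sub>v y))\<^sup>2 \<le> (x \<bullet> (D *\<^sub>v x)) * (y \<bullet> (D *\<^sub>v y))"
    by (rule cs_psd[OF Dc Ds Dp x y])
  have "x \<bullet> (D *\<^sub>v y) = R" unfolding R_def using comm_scalar_prod[OF x Dy] .
  then have cs': "R\<^sup>2 \<le> (x \<bullet> (D *\<^sub>v x)) * (y \<bullet> (D *\<^sub>v y))" using cs by simp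
  have "R \<le> (1 - a / \<Lambda>) * (y \<bullet> (D *\<^sub>v y))"
  proof (rule real_P[OF a L aL sp_self_ge[OF x] Dp[OF x] Dp[OF y] _ dup[OF x] cs'])
    show "a * (x \<bullet> x) + x \<bullet> (D *\<^sub>v x) \<le> R" using RAD alow[OF x] by simp
  qed
  then show ?thesis unfolding R_def x_def .
qed

lemma nb1:
  fixes B :: "real mat" and \<Lambda> :: real
  assumes B: "sym_posdef B N" and g: "g \<in> carrier_vec N"
    and up: "\<And>x. x \<in> carrier_vec N \<Longrightarrow> x \<bullet> (B *\<^sub>v x) \<le> \<Lambda> * (x \<bullet> x)" and L: "\<Lambda> > 0"
  shows "g \<bullet> g \<le> \<Lambda>\<^sup>2 * ((mat_inv B *\<^sub>v g) \<bullet> (mat_inv B *\<^sub>v g))"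
proof -
  have Bc: "B \<in> carrier_mat N N" and Bs: "transpose_mat B = B" using B unfolding sym_posdef_def by auto
  have Bp: "\<And>v. v \<in> carrier_vec N \<Longrightarrow> v \<bullet> (B *\<^sub>v v) \<ge> 0" using pd_psd[OF B] unfolding psd_def by auto
  note Bi = pd_inv[OF B]
  define z where "z = mat_inv B *\<^sub>v g"
  have z: "z \<in> carrier_vec N" unfolding z_def using Bi g by simp
  have Bz: "B *\<^sub>v z = g" unfolding z_def using pd_inv_vec[OF B g] by simp
  have "(g \<bullet> (B *\<^sub>v z))\<^sup>2 \<le> (g \<bullet> (B *\<^sub>v g)) * (z \<bullet> (B *\<^sub>v z))"
    by (rule cs_psd[OF Bc Bs Bp g z])
  then have c: "(g \<bullet> g)\<^sup>2 \<le> (g \<bullet> (B *\<^sub>v g)) * (z \<bullet> g)" using Bz by simp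
  have "z \<bullet> g \<ge> 0" using Bp[OF z] Bz by simp
  have "(g \<bullet> (B *\<^sub>v g)) * (z \<bullet> g) \<le> (\<Lambda> * (g \<bullet> g)) * (z \<bullet> g)"
    using up[OF g] \<open>z \<bullet> g \<ge> 0\<close> by (intro mult_right_mono) auto
  with c have c2: "(g \<bullet> g)\<^sup>2 \<le> (\<Lambda> * (g \<bullet> g)) * (z \<bullet> g)" by linarith
  have zz: "(z \<bullet> g)\<^sup>2 \<le> (z \<bullet> z) * (g \<bullet> g)"
    using cs_psd[of "1\<^sub>m N" N z g] z g by (simp add: psd_def sp_self_ge)
  show ?thesis
  proof (cases "g \<bullet> g = 0")
    case True then show ?thesis using sp_self_ge[OF z] unfolding z_def[symmetric] by simp
  next
    case False
    then have gp: "g \<bullet> g > 0" using sp_self_ge[OF g] by simp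
    from c2 have "(g \<bullet> g) * (g \<bullet> g) \<le> (\<Lambda> * (z \<bullet> g)) * (g \<bullet> g)" by (simp add: power2_eq_square algebra_simps)
    then have gz: "g \<bullet> g \<le> \<Lambda> * (z \<bullet> g)" using gp by simp
    have "(g \<bullet> g)\<^sup>2 \<le> (\<Lambda> * (z \<bullet> g))\<^sup>2" using gz gp by (intro power_mono) auto
    then have "(g \<bullet> g)\<^sup>2 \<le> \<Lambda>\<^sup>2 * (z \<bullet> g)\<^sup>2" by (simp add: power_mult_distrib)
    also have "\<dots> \<le> \<Lambda>\<^sup>2 * ((z \<bullet> z) * (g \<bullet> g))" using zz by (intro mult_left_mono) auto
    finally have "(g \<bullet> g) * (g \<bullet> g) \<le> (\<Lambda>\<^sup>2 * (z \<bullet> z)) * (g \<bullet> g)" by (simp add: power2_eq_square algebra_simps)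
    then have "g \<bullet> g \<le> \<Lambda>\<^sup>2 * (z \<bullet> z)" using gp by simp
    then show ?thesis unfolding z_def .
  qed
qed

lemma nb2:
  fixes A :: "real mat" and a :: real
  assumes A: "sym_posdef A N" and g: "g \<in> carrier_vec N"
    and low: "\<And>x. x \<in> carrier_vec N \<Longrightarrow> a * (x \<bullet> x) \<le> x \<bullet> (A *\<^sub>v x)" and a: "a > 0"
  shows "a\<^sup>2 * ((mat_inv A *\<^sub>v g) \<bullet> (mat_inv A *\<^sub>v g)) \<le> g \<bullet> g"
proof -
  note Ai = pd_inv[OF A]
  define w where "w = mat_inv A *\<^sub>v g"
  have w: "w \<in> carrier_vec N" unfolding w_def using Ai g by simp
  have Aw: "A *\<^sub>v w = g" unfolding w_def using pd_inv_vec[OF A g] by simp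
  have l1: "a * (w \<bullet> w) \<le> w \<bullet> g" using low[OF w] Aw by simp
  have cs: "(w \<bullet> g)\<^sup>2 \<le> (w \<bullet> w) * (g \<bullet> g)"
    using cs_psd[of "1\<^sub>m N" N w g] w g by (simp add: psd_def sp_self_ge)
  have ww: "w \<bullet> w \<ge> 0" using sp_self_ge[OF w] .
  show ?thesis
  proof (cases "w \<bullet> w = 0")
    case True then show ?thesis using sp_self_ge[OF g] unfolding w_def[symmetric] by simp
  next
    case False
    then have wp: "w \<bullet> w > 0" using ww by simp
    have "(a * (w \<bullet> w))\<^sup>2 \<le> (w \<bullet> g)\<^sup>2" using l1 a wp by (intro power_mono) auto
    also have "\<dots> \<le> (w \<bullet> w) * (g \<bullet> g)" using cs .
    finally have "(a\<^sup>2 * (w \<bullet> w)) * (w \<bullet> w) \<le> (g \<bullet> g) * (w \<bullet> w)" by (simp add: power2_eq_square algebra_simps)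
    then show ?thesis using wp unfolding w_def[symmetric] by simp
  qed
qed

lemma rank_trace:
  fixes M :: "real mat"
  assumes M: "M \<in> carrier_mat N N" and Ms: "transpose_mat M = M" and g: "g \<in> carrier_vec N"
  shows "(\<Sum>e<N. (g \<bullet> (M *\<^sub>v unit_vec N e))\<^sup>2) = (M *\<^sub>v g) \<bullet> (M *\<^sub>v g)"
proof -
  have "g \<bullet> (M *\<^sub>v unit_vec N e) = (M *\<^sub>v g) $ e" if e: "e < N" for e
    using sym_transfer[OF M Ms g unit_vec_carrier[of N e]] scalar_prod_right_unit[OF e] by simp
  then have "(\<Sum>e<N. (g \<bullet> (M *\<^sub>v unit_vec N e))\<^sup>2) = (\<Sum>e<N. (M *\<^sub>v g) $ e * (M *\<^sub>v g) $ e)"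
    by (intro sum.cong refl) (simp add: power2_eq_square)
  also have "\<dots> = (M *\<^sub>v g) \<bullet> (M *\<^sub>v g)" using M g by (simp add: sp_sum[of _ N])
  finally show ?thesis .
qed

locale setting =
  fixes n p l :: nat and A C X0 W :: "real mat" and \<sigma> :: "nat \<Rightarrow> real"
  assumes n: "n > 0" and p: "p > 0" and l: "l > 0" and Cc: "C \<in> carrier_mat p n"
    and X0: "sym_posdef X0 n" and W: "sym_posdef W n" and \<sigma>: "\<forall>i<p. \<sigma> i > 0"
begin

abbreviation "LL \<equiv> Lmat n l X0 W"
abbreviation "uu S \<equiv> Uf n l A C \<sigma> S"
abbreviation "MM S \<equiv> LL + uu S"
abbreviation "JJ S \<equiv> mat_trace (mat_inv (MM S))"
abbreviation "II \<equiv> {..<p}"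
abbreviation "ff \<equiv> ffun n p l A C X0 W \<sigma>"

lemma Npos: "n * l > 0" using n l by simp

lemma Lpd: "sym_posdef LL (n * l)" using L_pd[OF n l X0 W] .

lemma Lc: "LL \<in> carrier_mat (n * l) (n * l)" using Lpd unfolding sym_posdef_def by auto

lemma Mpd: "finite S \<Longrightarrow> sym_posdef (MM S) (n * l)"
  using pd_add_psd[OF Lpd Uf_psd] by blast

lemma Mc: "MM S \<in> carrier_mat (n * l) (n * l)" using Lc by simp

lemma J_eq: "S \<subseteq> II \<Longrightarrow> Jfun n p l A C X0 W \<sigma> S = JJ S"
  unfolding Jfun_def using Umat_eq[OF Cc \<sigma>] by simp

lemma f_diff: "S \<subseteq> II \<Longrightarrow> T \<subseteq> II \<Longrightarrow> ff T - ff S = JJ S - JJ T"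
  unfolding ffun_def using J_eq by simp

lemma uu_split: "finite S \<Longrightarrow> finite T \<Longrightarrow> S \<inter> T = {} \<Longrightarrow> MM (S \<union> T) = MM S + uu T"
  using Uf_union[of S T n l A C \<sigma>] Lc by (simp add: assoc_add_mat)

lemma qf_M: "x \<in> carrier_vec (n * l) \<Longrightarrow> x \<bullet> (MM S *\<^sub>v x) = x \<bullet> (LL *\<^sub>v x) + x \<bullet> (uu S *\<^sub>v x)"
  using bil_add[OF Lc Uf_carrier] by blast

lemma uu_ge: "finite S \<Longrightarrow> x \<in> carrier_vec (n * l) \<Longrightarrow> x \<bullet> (uu S *\<^sub>v x) \<ge> 0"
  using Uf_psd unfolding psd_def by blast

lemma uu_mono:
  assumes "T \<subseteq> S" "finite S" "x \<in> carrier_vec (n * l)"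
  shows "x \<bullet> (uu T *\<^sub>v x) \<le> x \<bullet> (uu S *\<^sub>v x)"
proof -
  have S: "S = T \<union> (S - T)" using assms by auto
  have "uu S = uu T + uu (S - T)" using Uf_union[of T "S - T" n l A C \<sigma>] assms S
    by (metis Diff_disjoint finite_Diff finite_subset)
  then have "x \<bullet> (uu S *\<^sub>v x) = x \<bullet> (uu T *\<^sub>v x) + x \<bullet> (uu (S - T) *\<^sub>v x)"
    using bil_add[OF Uf_carrier Uf_carrier assms(3) assms(3)] by simp
  then show ?thesis using uu_ge[of "S - T" x] assms by simp
qed

definition "aa = lambda_min LL"
definition "\<Lambda> = lambda_max (MM II)"

lemma Lam_eq: "lambda_max (LL + Umat n p l A C \<sigma> II) = \<Lambda>"
  unfolding \<Lambda>_def using Umat_eq[OF Cc \<sigma>, of II] by simp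

lemma a_pos: "aa > 0" unfolding aa_def using lmin_pos[OF Lpd Npos] .
lemma Lam_pos: "\<Lambda> > 0" unfolding \<Lambda>_def using lmax_pos[OF Mpd Npos] by simp

lemma a_low: "x \<in> carrier_vec (n * l) \<Longrightarrow> aa * (x \<bullet> x) \<le> x \<bullet> (LL *\<^sub>v x)"
  unfolding aa_def using Lpd lmin_props(2)[OF Lc _ Npos] unfolding sym_posdef_def by blast

lemma Lam_up: "x \<in> carrier_vec (n * l) \<Longrightarrow> x \<bullet> (MM II *\<^sub>v x) \<le> \<Lambda> * (x \<bullet> x)"
  unfolding \<Lambda>_def using Mpd[of II] lmax_props(2)[OF Mc _ Npos] unfolding sym_posdef_def by blast

lemma M_low: "finite S \<Longrightarrow> x \<in> carrier_vec (n * l) \<Longrightarrow> aa * (x \<bullet> x) \<le> x \<bullet> (MM S *\<^sub>v x)"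
  using a_low qf_M uu_ge by fastforce

lemma M_up: "S \<subseteq> II \<Longrightarrow> x \<in> carrier_vec (n * l) \<Longrightarrow> x \<bullet> (MM S *\<^sub>v x) \<le> \<Lambda> * (x \<bullet> x)"
  using Lam_up[of x] qf_M[of x S] qf_M[of x II] uu_mono[of S II x] by simp

lemma u_up: "\<omega> \<in> II \<Longrightarrow> x \<in> carrier_vec (n * l) \<Longrightarrow> x \<bullet> (uu {\<omega>} *\<^sub>v x) \<le> (\<Lambda> - aa) * (x \<bullet> x)"
  using Lam_up[of x] qf_M[of x II] uu_mono[of "{\<omega>}" II x] a_low[of x] by (simp add: algebra_simps)

lemma a_le_Lam: "aa \<le> \<Lambda>"
proof -
  let ?e = "unit_vec (n * l) 0 :: real vec"
  have e: "?e \<in> carrier_vec (n * l)" by simp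
  have "?e \<bullet> ?e = 1" using Npos by (simp add: scalar_prod_right_unit)
  then show ?thesis using M_low[of II ?e] M_up[of II ?e] e by simp
qed

lemma trace_J:
  assumes S: "finite S" and T: "finite T"
  shows "JJ S - JJ T = (\<Sum>j<n * l. unit_vec (n * l) j \<bullet> (mat_inv (MM S) *\<^sub>v unit_vec (n * l) j)
                         - unit_vec (n * l) j \<bullet> (mat_inv (MM T) *\<^sub>v unit_vec (n * l) j))"
  using trace_unit[OF pd_inv(1)[OF Mpd[OF S]]] trace_unit[OF pd_inv(1)[OF Mpd[OF T]]]
  by (simp add: sum_subtractf)

lemma mono_J:
  assumes S1: "S1 \<subseteq> S2" and S2: "S2 \<subseteq> II"
  shows "JJ S2 \<le> JJ S1"
proof -
  have f2: "finite S2" using S2 finite_subset by blast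
  have f1: "finite S1" using S1 f2 finite_subset by blast
  have f3: "finite (S2 - S1)" using f2 by simp
  have eq: "S2 = S1 \<union> (S2 - S1)" using S1 by auto
  have B: "MM S2 = MM S1 + uu (S2 - S1)" using uu_split[OF f1 f3] eq by auto
  have "0 \<le> (\<Sum>j<n * l. unit_vec (n * l) j \<bullet> (mat_inv (MM S1) *\<^sub>v unit_vec (n * l) j)
                         - unit_vec (n * l) j \<bullet> (mat_inv (MM S2) *\<^sub>v unit_vec (n * l) j))"
  proof (rule sum_nonneg)
    fix j assume "j \<in> {..<n * l}"
    let ?e = "unit_vec (n * l) j :: real vec"
    let ?w = "mat_inv (MM S2) *\<^sub>v ?e"
    let ?D = "uu (S2 - S1)"
    have e: "?e \<in> carrier_vec (n * l)" by simp
    have w: "?w \<in> carrier_vec (n * l)" using pd_inv(1)[OF Mpd[OF f2]] by simp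
    have Dw: "?D *\<^sub>v ?w \<in> carrier_vec (n * l)" by (rule mult_mat_vec_carrier[OF Uf_carrier w])
    have "?e \<bullet> (mat_inv (MM S1) *\<^sub>v ?e) - ?e \<bullet> (mat_inv (MM S2) *\<^sub>v ?e)
        = ?w \<bullet> (?D *\<^sub>v ?w) + (?D *\<^sub>v ?w) \<bullet> (mat_inv (MM S1) *\<^sub>v (?D *\<^sub>v ?w))"
      by (rule trace_diff_V2[OF Mpd[OF f1] Mpd[OF f2] Uf_carrier Uf_sym B e])
    moreover have "?w \<bullet> (?D *\<^sub>v ?w) \<ge> 0" using uu_ge[OF f3 w] .
    moreover have "(?D *\<^sub>v ?w) \<bullet> (mat_inv (MM S1) *\<^sub>v (?D *\<^sub>v ?w)) \<ge> 0"
      using pd_psd[OF pd_inv_pd[OF Mpd[OF f1]]] Dw unfolding psd_def by blast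
    ultimately show "0 \<le> ?e \<bullet> (mat_inv (MM S1) *\<^sub>v ?e) - ?e \<bullet> (mat_inv (MM S2) *\<^sub>v ?e)" by simp
  qed
  then show ?thesis using trace_J[OF f1 f2] by simp
qed

end

context setting begin

abbreviation "ee j \<equiv> (unit_vec (n * l) j :: real vec)"
abbreviation "gg \<equiv> gv n l A C \<sigma>"

lemma y_dec: "finite T \<Longrightarrow> y \<in> carrier_vec (n * l) \<Longrightarrow>
   y \<bullet> (uu T *\<^sub>v y) = (\<Sum>\<omega>\<in>T. y \<bullet> (uu {\<omega>} *\<^sub>v y))"
  by (simp add: Uf_qf)

lemma sum_rank:
  assumes M: "M \<in> carrier_mat (n * l) (n * l)" and Ms: "transpose_mat M = M"
  shows "(\<Sum>e<n * l. (M *\<^sub>v ee e) \<bullet> (uu {j} *\<^sub>v (M *\<^sub>v ee e))) = (\<Sum>t<l. (M *\<^sub>v gg j t) \<bullet> (M *\<^sub>v gg j t))"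
proof -
  have "(\<Sum>e<n * l. (M *\<^sub>v ee e) \<bullet> (uu {j} *\<^sub>v (M *\<^sub>v ee e))) = (\<Sum>e<n * l. \<Sum>t<l. (gg j t \<bullet> (M *\<^sub>v ee e))\<^sup>2)"
    using M by (intro sum.cong refl) (simp add: Uf_qf)
  also have "\<dots> = (\<Sum>t<l. \<Sum>e<n * l. (gg j t \<bullet> (M *\<^sub>v ee e))\<^sup>2)" by (rule sum.swap)
  also have "\<dots> = (\<Sum>t<l. (M *\<^sub>v gg j t) \<bullet> (M *\<^sub>v gg j t))"
    using rank_trace[OF M Ms gv_carrier] by simp
  finally show ?thesis .
qed

lemma single_lb:
  assumes S: "S \<subseteq> II" and w: "\<omega> \<in> II" "\<omega> \<notin> S"
  shows "(aa / \<Lambda>) * (\<Sum>j<n * l. (mat_inv (MM S) *\<^sub>v ee j) \<bullet> (uu {\<omega>} *\<^sub>v (mat_inv (MM S) *\<^sub>v ee j)))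
         \<le> JJ S - JJ (S \<union> {\<omega>})"
proof -
  have fS: "finite S" using S finite_subset by blast
  have fS': "finite (S \<union> {\<omega>})" using fS by simp
  have B: "MM (S \<union> {\<omega>}) = MM S + uu {\<omega>}" using uu_split[OF fS, of "{\<omega>}"] w by simp
  have "(aa / \<Lambda>) * (\<Sum>j<n * l. (mat_inv (MM S) *\<^sub>v ee j) \<bullet> (uu {\<omega>} *\<^sub>v (mat_inv (MM S) *\<^sub>v ee j)))
     = (\<Sum>j<n * l. (aa / \<Lambda>) * ((mat_inv (MM S) *\<^sub>v ee j) \<bullet> (uu {\<omega>} *\<^sub>v (mat_inv (MM S) *\<^sub>v ee j))))"
    by (simp add: sum_distrib_left)
  also have "\<dots> \<le> (\<Sum>j<n * l. ee j \<bullet> (mat_inv (MM S) *\<^sub>v ee j) - ee j \<bullet> (mat_inv (MM (S \<union> {\<omega>})) *\<^sub>v ee j))"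
  proof (rule sum_mono)
    fix j assume "j \<in> {..<n * l}"
    let ?y = "mat_inv (MM S) *\<^sub>v ee j"
    let ?D = "uu {\<omega>}"
    have e: "ee j \<in> carrier_vec (n * l)" by simp
    have y: "?y \<in> carrier_vec (n * l)" using pd_inv(1)[OF Mpd[OF fS]] by simp
    have V1: "ee j \<bullet> (mat_inv (MM S) *\<^sub>v ee j) - ee j \<bullet> (mat_inv (MM (S \<union> {\<omega>})) *\<^sub>v ee j)
        = ?y \<bullet> (?D *\<^sub>v ?y) - (?D *\<^sub>v ?y) \<bullet> (mat_inv (MM (S \<union> {\<omega>})) *\<^sub>v (?D *\<^sub>v ?y))"
      by (rule trace_diff_V1[OF Mpd[OF fS] Mpd[OF fS'] Uf_carrier Uf_sym B e])
    have P: "(?D *\<^sub>v ?y) \<bullet> (mat_inv (MM (S \<union> {\<omega>})) *\<^sub>v (?D *\<^sub>v ?y)) \<le> (1 - aa / \<Lambda>) * (?y \<bullet> (?D *\<^sub>v ?y))"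
      by (rule pointwise_P[OF Mpd[OF fS] Mpd[OF fS'] Uf_psd B y M_low[OF fS] u_up[OF w(1)] a_pos Lam_pos a_le_Lam]) auto
    show "(aa / \<Lambda>) * (?y \<bullet> (?D *\<^sub>v ?y)) \<le> ee j \<bullet> (mat_inv (MM S) *\<^sub>v ee j) - ee j \<bullet> (mat_inv (MM (S \<union> {\<omega>})) *\<^sub>v ee j)"
      using V1 P by (simp add: algebra_simps)
  qed
  also have "\<dots> = JJ S - JJ (S \<union> {\<omega>})" using trace_J[OF fS fS'] by simp
  finally show ?thesis .
qed

lemma multi_ub:
  assumes S: "S \<subseteq> II" and O: "\<Omega> \<subseteq> II"
  shows "JJ S - JJ (S \<union> \<Omega>) \<le> (\<Sum>j<n * l. (mat_inv (MM S) *\<^sub>v ee j) \<bullet> (uu (\<Omega> - S) *\<^sub>v (mat_inv (MM S) *\<^sub>v ee j)))"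
proof -
  have fS: "finite S" using S finite_subset by blast
  have fO: "finite (\<Omega> - S)" using O finite_subset by blast
  have eq: "S \<union> \<Omega> = S \<union> (\<Omega> - S)" by auto
  have fS': "finite (S \<union> \<Omega>)" using fS O finite_subset by blast
  have B: "MM (S \<union> \<Omega>) = MM S + uu (\<Omega> - S)" using uu_split[OF fS fO] by simp
  have "JJ S - JJ (S \<union> \<Omega>) = (\<Sum>j<n * l. ee j \<bullet> (mat_inv (MM S) *\<^sub>v ee j) - ee j \<bullet> (mat_inv (MM (S \<union> \<Omega>)) *\<^sub>v ee j))"
    using trace_J[OF fS fS'] by simp
  also have "\<dots> \<le> (\<Sum>j<n * l. (mat_inv (MM S) *\<^sub>v ee j) \<bullet> (uu (\<Omega> - S) *\<^sub>v (mat_inv (MM S) *\<^sub>v ee j)))"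
  proof (rule sum_mono)
    fix j assume "j \<in> {..<n * l}"
    let ?y = "mat_inv (MM S) *\<^sub>v ee j"
    let ?D = "uu (\<Omega> - S)"
    have e: "ee j \<in> carrier_vec (n * l)" by simp
    have y: "?y \<in> carrier_vec (n * l)" using pd_inv(1)[OF Mpd[OF fS]] by simp
    have Dy: "?D *\<^sub>v ?y \<in> carrier_vec (n * l)" by (rule mult_mat_vec_carrier[OF Uf_carrier y])
    have V1: "ee j \<bullet> (mat_inv (MM S) *\<^sub>v ee j) - ee j \<bullet> (mat_inv (MM (S \<union> \<Omega>)) *\<^sub>v ee j)
        = ?y \<bullet> (?D *\<^sub>v ?y) - (?D *\<^sub>v ?y) \<bullet> (mat_inv (MM (S \<union> \<Omega>)) *\<^sub>v (?D *\<^sub>v ?y))"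
      by (rule trace_diff_V1[OF Mpd[OF fS] Mpd[OF fS'] Uf_carrier Uf_sym B e])
    have "(?D *\<^sub>v ?y) \<bullet> (mat_inv (MM (S \<union> \<Omega>)) *\<^sub>v (?D *\<^sub>v ?y)) \<ge> 0"
      using pd_psd[OF pd_inv_pd[OF Mpd[OF fS']]] Dy unfolding psd_def by blast
    then show "ee j \<bullet> (mat_inv (MM S) *\<^sub>v ee j) - ee j \<bullet> (mat_inv (MM (S \<union> \<Omega>)) *\<^sub>v ee j) \<le> ?y \<bullet> (?D *\<^sub>v ?y)"
      using V1 by simp
  qed
  finally show ?thesis .
qed

lemma submod_ineq:
  assumes S: "S \<subseteq> II" and O: "\<Omega> \<subseteq> II"
  shows "(aa / \<Lambda>) * rho ff \<Omega> S \<le> (\<Sum>\<omega>\<in>\<Omega> - S. rho ff {\<omega>} S)"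
proof -
  have fO: "finite (\<Omega> - S)" using O finite_subset by blast
  let ?y = "\<lambda>j. mat_inv (MM S) *\<^sub>v ee j"
  have y: "?y j \<in> carrier_vec (n * l)" for j
    using pd_inv(1)[OF Mpd[of S]] S finite_subset by fastforce
  have r1: "rho ff \<Omega> S = JJ S - JJ (S \<union> \<Omega>)" unfolding rho_def using f_diff[OF S] S O by simp
  have r2: "rho ff {\<omega>} S = JJ S - JJ (S \<union> {\<omega>})" if "\<omega> \<in> \<Omega> - S" for \<omega>
    unfolding rho_def using f_diff[OF S] S O that by auto
  have g0: "aa / \<Lambda> \<ge> 0" using a_pos Lam_pos by simp
  have "(aa / \<Lambda>) * rho ff \<Omega> S \<le> (aa / \<Lambda>) * (\<Sum>j<n * l. ?y j \<bullet> (uu (\<Omega> - S) *\<^sub>v ?y j))"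
    unfolding r1 using multi_ub[OF S O] g0 by (rule mult_left_mono)
  also have "\<dots> = (aa / \<Lambda>) * (\<Sum>j<n * l. \<Sum>\<omega>\<in>\<Omega> - S. ?y j \<bullet> (uu {\<omega>} *\<^sub>v ?y j))"
    using y_dec[OF fO y] by simp
  also have "\<dots> = (\<Sum>j<n * l. \<Sum>\<omega>\<in>\<Omega> - S. (aa / \<Lambda>) * (?y j \<bullet> (uu {\<omega>} *\<^sub>v ?y j)))"
    by (simp add: sum_distrib_left)
  also have "\<dots> = (\<Sum>\<omega>\<in>\<Omega> - S. \<Sum>j<n * l. (aa / \<Lambda>) * (?y j \<bullet> (uu {\<omega>} *\<^sub>v ?y j)))"
    by (rule sum.swap)
  also have "\<dots> = (\<Sum>\<omega>\<in>\<Omega> - S. (aa / \<Lambda>) * (\<Sum>j<n * l. ?y j \<bullet> (uu {\<omega>} *\<^sub>v ?y j)))"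
    by (simp add: sum_distrib_left)
  also have "\<dots> \<le> (\<Sum>\<omega>\<in>\<Omega> - S. rho ff {\<omega>} S)"
    using single_lb[OF S] O r2 by (intro sum_mono) auto
  finally show ?thesis .
qed

lemma curv_ineq:
  assumes S: "S \<subseteq> II" and O: "\<Omega> \<subseteq> II" and j: "j \<in> S - \<Omega>"
  shows "(aa\<^sup>2 / \<Lambda>\<^sup>2) * rho ff {j} (S - {j}) \<le> rho ff {j} ((S - {j}) \<union> \<Omega>)"
proof -
  define T where "T = (S - {j}) \<union> \<Omega>"
  define S' where "S' = S - {j}"
  have jI: "j \<in> II" using j S by auto
  have TI: "T \<subseteq> II" unfolding T_def using S O by auto
  have SI: "S' \<subseteq> II" unfolding S'_def using S by auto
  have fT: "finite T" using TI finite_subset by blast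
  have fS: "finite S'" using SI finite_subset by blast
  have jT: "j \<notin> T" unfolding T_def using j by auto
  have jS: "j \<notin> S'" unfolding S'_def by auto
  define gs where "gs = (\<Sum>t<l. gg j t \<bullet> gg j t)"
  have fT': "finite (T \<union> {j})" using fT by simp
  have fS': "finite (S' \<union> {j})" using fS by simp
  have BT: "MM (T \<union> {j}) = MM T + uu {j}" using uu_split[OF fT, of "{j}"] jT by simp
  have BS: "MM (S' \<union> {j}) = MM S' + uu {j}" using uu_split[OF fS, of "{j}"] jS by simp
  have L0: "\<Lambda> > 0" and a0: "aa > 0" using Lam_pos a_pos .
  let ?Bi = "mat_inv (MM (T \<union> {j}))"
  have Bic: "?Bi \<in> carrier_mat (n * l) (n * l)" using pd_inv(1)[OF Mpd[OF fT']] .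
  have Bis: "transpose_mat ?Bi = ?Bi" using pd_inv_sym[OF Mpd[OF fT']] .
  have "gs / \<Lambda>\<^sup>2 = (\<Sum>t<l. (gg j t \<bullet> gg j t) / \<Lambda>\<^sup>2)" unfolding gs_def by (simp add: sum_divide_distrib)
  also have "\<dots> \<le> (\<Sum>t<l. (?Bi *\<^sub>v gg j t) \<bullet> (?Bi *\<^sub>v gg j t))"
  proof (rule sum_mono)
    fix t
    have "gg j t \<bullet> gg j t \<le> \<Lambda>\<^sup>2 * ((?Bi *\<^sub>v gg j t) \<bullet> (?Bi *\<^sub>v gg j t))"
      by (rule nb1[OF Mpd[OF fT'] gv_carrier M_up]) (use TI jI Lam_pos in auto)
    then show "(gg j t \<bullet> gg j t) / \<Lambda>\<^sup>2 \<le> (?Bi *\<^sub>v gg j t) \<bullet> (?Bi *\<^sub>v gg j t)"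
      using L0 by (simp add: field_simps)
  qed
  also have "\<dots> = (\<Sum>e<n * l. (?Bi *\<^sub>v ee e) \<bullet> (uu {j} *\<^sub>v (?Bi *\<^sub>v ee e)))"
    using sum_rank[OF Bic Bis] by simp
  also have "\<dots> \<le> (\<Sum>e<n * l. ee e \<bullet> (mat_inv (MM T) *\<^sub>v ee e) - ee e \<bullet> (?Bi *\<^sub>v ee e))"
  proof (rule sum_mono)
    fix e assume "e \<in> {..<n * l}"
    let ?w = "?Bi *\<^sub>v ee e"
    have ec: "ee e \<in> carrier_vec (n * l)" by simp
    have w: "?w \<in> carrier_vec (n * l)" using Bic by simp
    have Dw: "uu {j} *\<^sub>v ?w \<in> carrier_vec (n * l)" by (rule mult_mat_vec_carrier[OF Uf_carrier w])
    have V2: "ee e \<bullet> (mat_inv (MM T) *\<^sub>v ee e) - ee e \<bullet> (?Bi *\<^sub>v ee e)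
       = ?w \<bullet> (uu {j} *\<^sub>v ?w) + (uu {j} *\<^sub>v ?w) \<bullet> (mat_inv (MM T) *\<^sub>v (uu {j} *\<^sub>v ?w))"
      by (rule trace_diff_V2[OF Mpd[OF fT] Mpd[OF fT'] Uf_carrier Uf_sym BT ec])
    have "(uu {j} *\<^sub>v ?w) \<bullet> (mat_inv (MM T) *\<^sub>v (uu {j} *\<^sub>v ?w)) \<ge> 0"
      using pd_psd[OF pd_inv_pd[OF Mpd[OF fT]]] Dw unfolding psd_def by blast
    then show "?w \<bullet> (uu {j} *\<^sub>v ?w) \<le> ee e \<bullet> (mat_inv (MM T) *\<^sub>v ee e) - ee e \<bullet> (?Bi *\<^sub>v ee e)"
      using V2 by simp
  qed
  also have "\<dots> = JJ T - JJ (T \<union> {j})" using trace_J[OF fT fT'] by simp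
  finally have lowT: "gs / \<Lambda>\<^sup>2 \<le> JJ T - JJ (T \<union> {j})" .
  let ?Ai = "mat_inv (MM S')"
  have Aic: "?Ai \<in> carrier_mat (n * l) (n * l)" using pd_inv(1)[OF Mpd[OF fS]] .
  have Ais: "transpose_mat ?Ai = ?Ai" using pd_inv_sym[OF Mpd[OF fS]] .
  have "JJ S' - JJ (S' \<union> {j}) = (\<Sum>e<n * l. ee e \<bullet> (?Ai *\<^sub>v ee e) - ee e \<bullet> (mat_inv (MM (S' \<union> {j})) *\<^sub>v ee e))"
    using trace_J[OF fS fS'] by simp
  also have "\<dots> \<le> (\<Sum>e<n * l. (?Ai *\<^sub>v ee e) \<bullet> (uu {j} *\<^sub>v (?Ai *\<^sub>v ee e)))"
  proof (rule sum_mono)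
    fix e assume "e \<in> {..<n * l}"
    let ?y = "?Ai *\<^sub>v ee e"
    have ec: "ee e \<in> carrier_vec (n * l)" by simp
    have y: "?y \<in> carrier_vec (n * l)" using Aic by simp
    have Dy: "uu {j} *\<^sub>v ?y \<in> carrier_vec (n * l)" by (rule mult_mat_vec_carrier[OF Uf_carrier y])
    have V1: "ee e \<bullet> (?Ai *\<^sub>v ee e) - ee e \<bullet> (mat_inv (MM (S' \<union> {j})) *\<^sub>v ee e)
        = ?y \<bullet> (uu {j} *\<^sub>v ?y) - (uu {j} *\<^sub>v ?y) \<bullet> (mat_inv (MM (S' \<union> {j})) *\<^sub>v (uu {j} *\<^sub>v ?y))"
      by (rule trace_diff_V1[OF Mpd[OF fS] Mpd[OF fS'] Uf_carrier Uf_sym BS ec])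
    have "(uu {j} *\<^sub>v ?y) \<bullet> (mat_inv (MM (S' \<union> {j})) *\<^sub>v (uu {j} *\<^sub>v ?y)) \<ge> 0"
      using pd_psd[OF pd_inv_pd[OF Mpd[OF fS']]] Dy unfolding psd_def by blast
    then show "ee e \<bullet> (?Ai *\<^sub>v ee e) - ee e \<bullet> (mat_inv (MM (S' \<union> {j})) *\<^sub>v ee e) \<le> ?y \<bullet> (uu {j} *\<^sub>v ?y)"
      using V1 by simp
  qed
  also have "\<dots> = (\<Sum>t<l. (?Ai *\<^sub>v gg j t) \<bullet> (?Ai *\<^sub>v gg j t))"
    using sum_rank[OF Aic Ais] by simp
  also have "\<dots> \<le> (\<Sum>t<l. (gg j t \<bullet> gg j t) / aa\<^sup>2)"
  proof (rule sum_mono)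
    fix t
    have "aa\<^sup>2 * ((?Ai *\<^sub>v gg j t) \<bullet> (?Ai *\<^sub>v gg j t)) \<le> gg j t \<bullet> gg j t"
      by (rule nb2[OF Mpd[OF fS] gv_carrier M_low[OF fS] a_pos])
    then show "(?Ai *\<^sub>v gg j t) \<bullet> (?Ai *\<^sub>v gg j t) \<le> (gg j t \<bullet> gg j t) / aa\<^sup>2"
      using a0 by (simp add: field_simps)
  qed
  also have "\<dots> = gs / aa\<^sup>2" unfolding gs_def by (simp add: sum_divide_distrib)
  finally have upS: "JJ S' - JJ (S' \<union> {j}) \<le> gs / aa\<^sup>2" .
  have r1: "rho ff {j} (S - {j}) = JJ S' - JJ (S' \<union> {j})"
    unfolding rho_def S'_def using f_diff[of "S - {j}" "S - {j} \<union> {j}"] SI jI S'_def by auto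
  have r2: "rho ff {j} ((S - {j}) \<union> \<Omega>) = JJ T - JJ (T \<union> {j})"
    unfolding rho_def T_def using f_diff[of "(S - {j}) \<union> \<Omega>" "(S - {j}) \<union> \<Omega> \<union> {j}"] TI jI T_def by auto
  have "(aa\<^sup>2 / \<Lambda>\<^sup>2) * rho ff {j} (S - {j}) \<le> (aa\<^sup>2 / \<Lambda>\<^sup>2) * (gs / aa\<^sup>2)"
    unfolding r1 using upS by (intro mult_left_mono) auto
  also have "\<dots> = gs / \<Lambda>\<^sup>2" using a0 by (simp add: field_simps)
  also have "\<dots> \<le> rho ff {j} ((S - {j}) \<union> \<Omega>)" unfolding r2 using lowT .
  finally show ?thesis .
qed

end

theorem theorem1:
  fixes n p l :: nat and A C X0 W :: "real mat" and \<sigma> :: "nat \<Rightarrow> real"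
  assumes "n > 0" and "p > 0" and "l > 0"
    and "A \<in> carrier_mat n n" and "C \<in> carrier_mat p n"
    and "sym_posdef X0 n" and "sym_posdef W n"
    and "\<forall>i < p. \<sigma> i > 0"
  shows "(\<forall>S1 S2. S1 \<subseteq> S2 \<longrightarrow> S2 \<subseteq> {..<p} \<longrightarrow>
             ffun n p l A C X0 W \<sigma> S1 \<le> ffun n p l A C X0 W \<sigma> S2)
    \<and> submod_ratio (ffun n p l A C X0 W \<sigma>) {..<p}
        \<ge> ereal (lambda_min (Lmat n l X0 W)
                 / lambda_max (Lmat n l X0 W + Umat n p l A C \<sigma> {..<p}))
    \<and> lambda_min (Lmat n l X0 W) / lambda_max (Lmat n l X0 W + Umat n p l A C \<sigma> {..<p}) > 0
    \<and> curvature (ffun n p l A C X0 W \<sigma>) {..<p}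
        \<le> ereal (1 - (lambda_min (Lmat n l X0 W))\<^sup>2
                   / (lambda_max (Lmat n l X0 W + Umat n p l A C \<sigma> {..<p}))\<^sup>2)
    \<and> 1 - (lambda_min (Lmat n l X0 W))\<^sup>2
          / (lambda_max (Lmat n l X0 W + Umat n p l A C \<sigma> {..<p}))\<^sup>2 < 1"
proof -
  interpret setting n p l A C X0 W \<sigma>
    by unfold_locales (use assms in auto)
  have eqa: "lambda_min (Lmat n l X0 W) = aa" unfolding aa_def ..
  have eqL: "lambda_max (Lmat n l X0 W + Umat n p l A C \<sigma> {..<p}) = \<Lambda>" using Lam_eq .
  have a0: "aa > 0" and L0: "\<Lambda> > 0" using a_pos Lam_pos .
  have P1: "\<forall>S1 S2. S1 \<subseteq> S2 \<longrightarrow> S2 \<subseteq> {..<p} \<longrightarrow> ff S1 \<le> ff S2"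
  proof (intro allI impI)
    fix S1 S2 :: "nat set" assume h: "S1 \<subseteq> S2" "S2 \<subseteq> {..<p}"
    have "ff S2 - ff S1 = JJ S1 - JJ S2" using f_diff[of S1 S2] h by auto
    moreover have "JJ S2 \<le> JJ S1" using mono_J[OF h] .
    ultimately show "ff S1 \<le> ff S2" by simp
  qed
  have P2: "submod_ratio ff {..<p} \<ge> ereal (aa / \<Lambda>)"
    unfolding submod_ratio_def
  proof (rule Sup_upper, rule imageI, rule CollectI, intro allI impI)
    fix \<Omega> S :: "nat set" assume "\<Omega> \<subseteq> {..<p}" "S \<subseteq> {..<p}"
    then show "aa / \<Lambda> * rho ff \<Omega> S \<le> (\<Sum>\<omega>\<in>\<Omega> - S. rho ff {\<omega>} S)" using submod_ineq by blast
  qed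
  have P4: "curvature ff {..<p} \<le> ereal (1 - aa\<^sup>2 / \<Lambda>\<^sup>2)"
    unfolding curvature_def
  proof (rule Inf_lower, rule imageI, rule CollectI, intro allI impI)
    fix \<Omega> S :: "nat set" and j assume "\<Omega> \<subseteq> {..<p}" "S \<subseteq> {..<p}" "j \<in> S - \<Omega>"
    then show "(1 - (1 - aa\<^sup>2 / \<Lambda>\<^sup>2)) * rho ff {j} (S - {j}) \<le> rho ff {j} (S - {j} \<union> \<Omega>)"
      using curv_ineq by simp
  qed
  have P3: "aa / \<Lambda> > 0" using a0 L0 by simp
  have P5: "1 - aa\<^sup>2 / \<Lambda>\<^sup>2 < 1" using a0 L0 by simp
  show ?thesis unfolding eqa eqL using P1 P2 P3 P4 P5 by blast
qed

end
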